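(* For every indexed forest $F$ and every noncrossing permutation $\sigma$, the evaluation $\mathrm{ev}_\sigma(\mathfrak P_F)$ is Graham-positive, i.e. lies in $\mathbb Z_{\ge0}[t_2-t_1,t_3-t_2,\dots]$.
   Context: $\mathbf x=(x_1,x_2,\dots)$, $\mathbf t=(t_1,t_2,\dots)$; for $\sigma\in S_n$ (regarded as fixing integers $>n$), $\mathrm{ev}_\sigma f=f(t_{\sigma(1)},t_{\sigma(2)},\dots;\mathbf t)$. A set partition of $[n]$ is noncrossing if there are no distinct blocks $P,Q$ with $a,b\in P$, $c,d\in Q$, $a<c<b<d$; the associated noncrossing permutation acts on each block $\{a_1<\dots<a_p\}$ by $a_j\mapsto a_{j-1}$ ($j\ge2$), $a_1\mapsto a_p$. Indexed forests: sequences $F=(T_1,T_2,\dots)$ of binary plane trees (each node a leaf or an internal node with ordered left/right children), all but finitely many one-node trees; leaves identified with $\mathbb N$ left to right; $\emptyset$ has no internal nodes; $\rho_F(v)$ is the leaf reached from internal node $v$ by going repeatedly to left children; terminal: both children leaves; $\mathrm{Qdes}(F)=\{\rho_F(v):v\text{ terminal}\}$; $F/i$ deletes the terminal node with $\rho_F(v)=i$ (replacing it and its leaves by one leaf, relabeling). Double forest polynomials: $R_i^-f=f(x_1,\dots,x_{i-1},t_i,x_i,\dots;\mathbf t)$, $R_i^+f=f(x_1,\dots,x_i,t_i,x_{i+1},\dots;\mathbf t)$, $E_if=(R_i^+f-R_i^-f)/(x_i-t_i)$; $\mathfrak P_F$ is the unique homogeneous family ($\deg x_i=\deg t_i=1$)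 with $\mathfrak P_F(\mathbf t;\mathbf t)=\delta_{F,\emptyset}$ and $E_i\mathfrak P_F=\mathfrak P_{F/i}(\mathbf x;\widehat{\mathbf t}_i)$ if $i\in\mathrm{Qdes}(F)$, else $0$, $\widehat{\mathbf t}_i=(t_1,\dots,t_{i-1},t_{i+1},\dots)$. *)

theory Defs
  imports Main "HOL-Library.Poly_Mapping" "HOL-Library.Disjoint_Sets"
begin

text \<open>Variables: X k stands for x_(k+1), T k for t_(k+1) (0-based indexing).\<close>
datatype var = X nat | T nat

type_synonym 'v mpoly = "('v \<Rightarrow>\<^sub>0 nat) \<Rightarrow>\<^sub>0 int"

definition Var :: "'v \<Rightarrow> 'v mpoly" where
  "Var v = Poly_Mapping.single (Poly_Mapping.single v 1) 1"

definition Const :: "int \<Rightarrow> 'v mpoly" where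
  "Const c = Poly_Mapping.single 0 c"

definition psubst :: "('v \<Rightarrow> 'w mpoly) \<Rightarrow> 'v mpoly \<Rightarrow> 'w mpoly" where
  "psubst s p = (\<Sum>m\<in>Poly_Mapping.keys p. Const (Poly_Mapping.lookup p m) * (\<Prod>v\<in>Poly_Mapping.keys m. s v ^ Poly_Mapping.lookup m v))"

definition mdeg :: "('v \<Rightarrow>\<^sub>0 nat) \<Rightarrow> nat" where
  "mdeg m = (\<Sum>v\<in>Poly_Mapping.keys m. Poly_Mapping.lookup m v)"

definition homogeneous :: "'v mpoly \<Rightarrow> bool" where
  "homogeneous p \<longleftrightarrow> (\<exists>d. \<forall>m\<in>Poly_Mapping.keys p. mdeg m = d)"

text \<open>R_i^-, R_i^+ (paper index i+1), t-hat_i, evaluation x := t, ev_sigma.\<close>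
definition Rminus :: "nat \<Rightarrow> var mpoly \<Rightarrow> var mpoly" where
  "Rminus i = psubst (\<lambda>v. case v of
       X j \<Rightarrow> (if j < i then Var (X j) else if j = i then Var (T i) else Var (X (j - 1)))
     | T j \<Rightarrow> Var (T j))"

definition Rplus :: "nat \<Rightarrow> var mpoly \<Rightarrow> var mpoly" where
  "Rplus i = psubst (\<lambda>v. case v of
       X j \<Rightarrow> (if j \<le> i then Var (X j) else if j = Suc i then Var (T i) else Var (X (j - 1)))
     | T j \<Rightarrow> Var (T j))"

definition that :: "nat \<Rightarrow> var mpoly \<Rightarrow> var mpoly" where
  "that i = psubst (\<lambda>v. case v of
       X j \<Rightarrow> Var (X j)
     | T j \<Rightarrow> (if j < i then Var (T j) else Var (T (Suc j))))"

definition eval_tt :: "var mpoly \<Rightarrow> var mpoly" where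
  "eval_tt = psubst (\<lambda>v. case v of X j \<Rightarrow> Var (T j) | T j \<Rightarrow> Var (T j))"

definition ev :: "(nat \<Rightarrow> nat) \<Rightarrow> var mpoly \<Rightarrow> var mpoly" where
  "ev \<sigma> = psubst (\<lambda>v. case v of X j \<Rightarrow> Var (T (\<sigma> j)) | T j \<Rightarrow> Var (T j))"

text \<open>Graham-positive: in Z_{>=0}[t_2-t_1, t_3-t_2, ...]; Graham variable j is t_(j+2)-t_(j+1).\<close>
definition graham_positive :: "var mpoly \<Rightarrow> bool" where
  "graham_positive p \<longleftrightarrow>
     (\<exists>q :: nat mpoly. (\<forall>m. 0 \<le> Poly_Mapping.lookup q m) \<and>
        p = psubst (\<lambda>j. Var (T (Suc j)) - Var (T j)) q)"

datatype btree = Lf | Nd btree btree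

fun nleaves :: "btree \<Rightarrow> nat" where
  "nleaves Lf = 1"
| "nleaves (Nd l r) = nleaves l + nleaves r"

text \<open>Left leaves (0-based, within the tree) of terminal internal nodes.\<close>
fun tqdes :: "btree \<Rightarrow> nat set" where
  "tqdes Lf = {}"
| "tqdes (Nd l r) = (if l = Lf \<and> r = Lf then {0}
                     else tqdes l \<union> (\<lambda>k. k + nleaves l) ` tqdes r)"

text \<open>Contract the terminal node whose left leaf is k.\<close>
fun tcontract :: "nat \<Rightarrow> btree \<Rightarrow> btree" where
  "tcontract k Lf = Lf"
| "tcontract k (Nd l r) = (if l = Lf \<and> r = Lf then (if k = 0 then Lf else Nd l r)
                          else if k < nleaves l then Nd (tcontract k l) r
                          else Nd l (tcontract (k - nleaves l) r))"

type_synonym forest = "nat \<Rightarrow> btree"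

definition is_forest :: "forest \<Rightarrow> bool" where
  "is_forest F \<longleftrightarrow> finite {i. F i \<noteq> Lf}"

definition empty_forest :: forest where
  "empty_forest = (\<lambda>_. Lf)"

text \<open>Label of the first leaf of the i-th tree (leaves numbered 0,1,2,... left to right).\<close>
definition offset :: "forest \<Rightarrow> nat \<Rightarrow> nat" where
  "offset F i = (\<Sum>j<i. nleaves (F j))"

definition Qdes :: "forest \<Rightarrow> nat set" where
  "Qdes F = (\<Union>j. (\<lambda>k. offset F j + k) ` tqdes (F j))"

definition fcontract :: "forest \<Rightarrow> nat \<Rightarrow> forest" where
  "fcontract F i = (let j = (THE j. offset F j \<le> i \<and> i < offset F (Suc j))
                    in F(j := tcontract (i - offset F j) (F j)))"

definition is_double_forest_family :: "(forest \<Rightarrow> var mpoly) \<Rightarrow> bool" where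
  "is_double_forest_family P \<longleftrightarrow>
     (\<forall>F. is_forest F \<longrightarrow> homogeneous (P F)) \<and>
     (\<forall>F. is_forest F \<longrightarrow> eval_tt (P F) = (if F = empty_forest then 1 else 0)) \<and>
     (\<forall>F i. is_forest F \<longrightarrow>
        (Var (X i) - Var (T i)) *
          (if i \<in> Qdes F then that i (P (fcontract F i)) else 0)
        = Rplus i (P F) - Rminus i (P F))"

definition noncrossing :: "nat set set \<Rightarrow> bool" where
  "noncrossing Ps \<longleftrightarrow> \<not> (\<exists>P\<in>Ps. \<exists>Q\<in>Ps. P \<noteq> Q \<and>
      (\<exists>a b c d. a \<in> P \<and> b \<in> P \<and> c \<in> Q \<and> d \<in> Q \<and> a < c \<and> c < b \<and> b < d))"

definition nc_perm :: "nat \<Rightarrow> nat set set \<Rightarrow> nat \<Rightarrow> nat" where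
  "nc_perm n Ps k = (if k < n then
      (let B = (THE B. B \<in> Ps \<and> k \<in> B) in
         if k = Min B then Max B else Max {b \<in> B. b < k})
     else k)"

definition noncrossing_perm :: "(nat \<Rightarrow> nat) \<Rightarrow> bool" where
  "noncrossing_perm \<sigma> \<longleftrightarrow> (\<exists>n Ps. partition_on {..<n} Ps \<and> noncrossing Ps \<and> \<sigma> = nc_perm n Ps)"

end

theory Submission
  imports Defs
begin

lemma Const_of_int: "Const c = of_int c"
  unfolding Const_def by (metis of_int_eq_id id_apply single_of_int)

definition mon :: "('v \<Rightarrow> 'w mpoly) \<Rightarrow> ('v \<Rightarrow>\<^sub>0 nat) \<Rightarrow> 'w mpoly" where
  "mon s m = (\<Prod>v\<in>Poly_Mapping.keys m. s v ^ Poly_Mapping.lookup m v)"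

lemma mon_superset: "finite V \<Longrightarrow> Poly_Mapping.keys m \<subseteq> V \<Longrightarrow>
   mon s m = (\<Prod>v\<in>V. s v ^ Poly_Mapping.lookup m v)"
  unfolding mon_def
  by (rule prod.mono_neutral_left) (auto simp: in_keys_iff)

lemma mon_add: "mon s (m1 + m2) = mon s m1 * mon s m2"
proof -
  let ?V = "Poly_Mapping.keys m1 \<union> Poly_Mapping.keys m2"
  have "mon s (m1 + m2) = (\<Prod>v\<in>?V. s v ^ Poly_Mapping.lookup (m1+m2) v)"
    using keys_add[of m1 m2] by (intro mon_superset) auto
  also have "\<dots> = (\<Prod>v\<in>?V. s v ^ Poly_Mapping.lookup m1 v) * (\<Prod>v\<in>?V. s v ^ Poly_Mapping.lookup m2 v)"
    by (simp add: lookup_add power_add prod.distrib)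
  also have "\<dots> = mon s m1 * mon s m2"
    by (subst (1 2) mon_superset[where V="?V"]) auto
  finally show ?thesis .
qed

lemma mon_zero [simp]: "mon s 0 = 1"
  by (simp add: mon_def)

lemma psubst_superset: "finite S \<Longrightarrow> Poly_Mapping.keys p \<subseteq> S \<Longrightarrow>
   psubst s p = (\<Sum>m\<in>S. of_int (Poly_Mapping.lookup p m) * mon s m)"
  unfolding psubst_def mon_def Const_of_int
  by (rule sum.mono_neutral_left) (auto simp: in_keys_iff)

lemma psubst_add: "psubst s (p + q) = psubst s p + psubst s q"
proof -
  let ?S = "Poly_Mapping.keys p \<union> Poly_Mapping.keys q"
  have "psubst s (p + q) = (\<Sum>m\<in>?S. of_int (Poly_Mapping.lookup (p+q) m) * mon s m)"
    using keys_add[of p q] by (intro psubst_superset) auto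
  also have "\<dots> = psubst s p + psubst s q"
    by (subst (1 2) psubst_superset[where S="?S"]) (auto simp: lookup_add algebra_simps sum.distrib)
  finally show ?thesis .
qed

lemma psubst_zero [simp]: "psubst s 0 = 0"
  by (simp add: psubst_def)

lemma psubst_sum: "psubst s (\<Sum>i\<in>I. f i) = (\<Sum>i\<in>I. psubst s (f i))"
  by (induction I rule: infinite_finite_induct) (auto simp: psubst_add)

lemma psubst_single: "psubst s (Poly_Mapping.single m c) = of_int c * mon s m"
  by (simp add: psubst_def mon_def Const_of_int)

lemma pm_expand: "p = (\<Sum>m\<in>Poly_Mapping.keys p. Poly_Mapping.single m (Poly_Mapping.lookup p m))"
  by (rule poly_mapping_eqI) (simp add: lookup_sum lookup_single when_def in_keys_iff sum.delta)

lemma psubst_mult: "psubst s (p * q) = psubst s p * psubst s q"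
proof -
  have "p * q = (\<Sum>m\<in>Poly_Mapping.keys p. \<Sum>n\<in>Poly_Mapping.keys q.
      Poly_Mapping.single (m + n) (Poly_Mapping.lookup p m * Poly_Mapping.lookup q n))"
  proof -
    have "p * q = (\<Sum>m\<in>Poly_Mapping.keys p. Poly_Mapping.single m (Poly_Mapping.lookup p m)) *
       (\<Sum>m\<in>Poly_Mapping.keys q. Poly_Mapping.single m (Poly_Mapping.lookup q m))"
      by (rule arg_cong2[where f="(*)"]) (rule pm_expand)+
    then show ?thesis by (simp only: sum_product mult_single)
  qed
  then have "psubst s (p * q) = (\<Sum>m\<in>Poly_Mapping.keys p. \<Sum>n\<in>Poly_Mapping.keys q.
      of_int (Poly_Mapping.lookup p m) * mon s m * (of_int (Poly_Mapping.lookup q n) * mon s n))"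
    by (simp only: psubst_sum psubst_single mon_add of_int_mult mult_ac)
  also have "\<dots> = psubst s p * psubst s q"
    by (simp only: psubst_superset[OF finite_keys subset_refl, of _ p] psubst_superset[OF finite_keys subset_refl, of _ q] sum_product)
  finally show ?thesis .
qed

lemma single0_of_int: "(Poly_Mapping.single 0 c :: 'v mpoly) = of_int c"
  using Const_of_int[of c] by (simp add: Const_def)

lemma psubst_of_int [simp]: "psubst s (of_int c) = of_int c"
  using psubst_single[of s 0 c] by (simp add: single0_of_int)

lemma psubst_one [simp]: "psubst s 1 = 1"
  using psubst_of_int[of s 1] by simp

lemma psubst_diff: "psubst s (p - q) = psubst s p - psubst s q"
proof -
  have "psubst s p = psubst s ((p - q) + q)" by simp
  also have "\<dots> = psubst s (p - q) + psubst s q" by (rule psubst_add)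
  finally show ?thesis by simp
qed

lemma psubst_prod: "psubst s (\<Prod>i\<in>I. f i) = (\<Prod>i\<in>I. psubst s (f i))"
  by (induction I rule: infinite_finite_induct) (auto simp: psubst_mult)

lemma psubst_power: "psubst s (p ^ k) = psubst s p ^ k"
  by (induction k) (auto simp: psubst_mult)

lemma psubst_Var [simp]: "psubst s (Var v) = s v"
  by (simp add: Var_def psubst_single mon_def)

lemma psubst_comp: "psubst s (psubst r p) = psubst (\<lambda>v. psubst s (r v)) p"
  unfolding psubst_def[of r] Const_of_int
  by (simp add: psubst_sum psubst_mult psubst_prod psubst_power psubst_def[of "\<lambda>v. psubst s (r v)"] Const_of_int)

lemma mult_expand: "p * q = (\<Sum>m\<in>Poly_Mapping.keys p. \<Sum>n\<in>Poly_Mapping.keys q.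
      Poly_Mapping.single (m + n) (Poly_Mapping.lookup p m * Poly_Mapping.lookup q n))"
proof -
  have "p * q = (\<Sum>m\<in>Poly_Mapping.keys p. Poly_Mapping.single m (Poly_Mapping.lookup p m)) *
     (\<Sum>m\<in>Poly_Mapping.keys q. Poly_Mapping.single m (Poly_Mapping.lookup q m))"
    by (rule arg_cong2[where f="(*)"]) (rule pm_expand)+
  then show ?thesis by (simp only: sum_product mult_single)
qed

inductive gp :: "var mpoly \<Rightarrow> bool" where
  gp_const: "c \<ge> 0 \<Longrightarrow> gp (of_int c)"
| gp_G: "gp (Var (T (Suc j)) - Var (T j))"
| gp_add: "gp p \<Longrightarrow> gp q \<Longrightarrow> gp (p + q)"
| gp_mult: "gp p \<Longrightarrow> gp q \<Longrightarrow> gp (p * q)"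

lemma gp_zero: "gp 0" using gp_const[of 0] by simp
lemma gp_one: "gp 1" using gp_const[of 1] by simp

lemma gp_diff: "a \<le> b \<Longrightarrow> gp (Var (T b) - Var (T a))"
proof (induction b)
  case 0 then show ?case using gp_zero by simp
next
  case (Suc b)
  show ?case
  proof (cases "a = Suc b")
    case True then show ?thesis using gp_zero by simp
  next
    case False
    then have "a \<le> b" using Suc.prems by simp
    then have "gp ((Var (T (Suc b)) - Var (T b)) + (Var (T b) - Var (T a)))"
      using Suc.IH gp_G gp_add by blast
    then show ?thesis by simp
  qed
qed

definition nonneg :: "nat mpoly \<Rightarrow> bool" where
  "nonneg q \<longleftrightarrow> (\<forall>m. 0 \<le> Poly_Mapping.lookup q m)"

lemma nonneg_mult: "nonneg p \<Longrightarrow> nonneg q \<Longrightarrow> nonneg (p * q)"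
  unfolding nonneg_def
  by (subst mult_expand) (auto simp: lookup_sum lookup_single when_def intro!: sum_nonneg)

lemma gp_graham: "gp p \<Longrightarrow> graham_positive p"
proof (induction rule: gp.induct)
  case (gp_const c)
  show ?case unfolding graham_positive_def
    by (rule exI[of _ "of_int c"]) (simp add: lookup_of_int when_def gp_const.hyps)
next
  case (gp_G j)
  have "\<forall>m. 0 \<le> Poly_Mapping.lookup (Var j :: nat mpoly) m"
    by (simp add: Var_def lookup_single when_def)
  then show ?case unfolding graham_positive_def
    by (intro exI[of _ "Var j"]) simp
next
  case (gp_add p q)
  then obtain a b where "nonneg a" "p = psubst (\<lambda>j. Var (T (Suc j)) - Var (T j)) a"
     "nonneg b" "q = psubst (\<lambda>j. Var (T (Suc j)) - Var (T j)) b"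
    unfolding graham_positive_def nonneg_def by blast
  then show ?case unfolding graham_positive_def
    by (intro exI[of _ "a + b"]) (simp add: psubst_add lookup_add nonneg_def)
next
  case (gp_mult p q)
  then obtain a b where "nonneg a" "p = psubst (\<lambda>j. Var (T (Suc j)) - Var (T j)) a"
     "nonneg b" "q = psubst (\<lambda>j. Var (T (Suc j)) - Var (T j)) b"
    unfolding graham_positive_def nonneg_def by blast
  then show ?case unfolding graham_positive_def
    using nonneg_mult[of a b] by (intro exI[of _ "a * b"]) (simp add: psubst_mult nonneg_def)
qed

definition hat :: "nat \<Rightarrow> nat \<Rightarrow> nat" where
  "hat i k = (if k < i then k else Suc k)"

lemma that_Var_T: "that i (Var (T j)) = Var (T (hat i j))"
  by (simp add: that_def hat_def)

lemma that_Var_X: "that i (Var (X j)) = Var (X j)"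
  by (simp add: that_def)

lemma gp_that: "gp p \<Longrightarrow> gp (that i p)"
proof (induction rule: gp.induct)
  case (gp_const c) then show ?case by (simp add: that_def gp.gp_const)
next
  case (gp_G j)
  have "hat i j \<le> hat i (Suc j)" by (simp add: hat_def)
  moreover have "that i (Var (T (Suc j)) - Var (T j)) = Var (T (hat i (Suc j))) - Var (T (hat i j))"
    unfolding that_def psubst_diff by (simp add: hat_def)
  ultimately show ?case by (simp add: gp_diff)
next
  case (gp_add p q) then show ?case by (simp add: that_def psubst_add gp.gp_add)
next
  case (gp_mult p q) then show ?case by (simp add: that_def psubst_mult gp.gp_mult)
qed

definition ins_plus :: "nat \<Rightarrow> (nat \<Rightarrow> nat) \<Rightarrow> nat \<Rightarrow> nat" where
  "ins_plus i \<rho> = (\<lambda>j. if j \<le> i then \<rho> j else if j = Suc i then i else \<rho> (j - 1))"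

definition ins_minus :: "nat \<Rightarrow> (nat \<Rightarrow> nat) \<Rightarrow> nat \<Rightarrow> nat" where
  "ins_minus i \<rho> = (\<lambda>j. if j < i then \<rho> j else if j = i then i else \<rho> (j - 1))"

definition stdz :: "nat \<Rightarrow> (nat \<Rightarrow> nat) \<Rightarrow> nat \<Rightarrow> nat" where
  "stdz i \<rho> = (\<lambda>j. if \<rho> j < i then \<rho> j else \<rho> j - 1)"

inductive good :: "(nat \<Rightarrow> nat) \<Rightarrow> bool" where
  good_id: "good (\<lambda>k. k)"
| goodA: "i < \<rho> i \<Longrightarrow> (\<forall>j. \<rho> j \<noteq> i) \<Longrightarrow> good (ins_minus i \<rho>) \<Longrightarrow> good (stdz i \<rho>)
     \<Longrightarrow> good (ins_plus i \<rho>)"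
| goodB: "\<rho> i < i \<Longrightarrow> (\<forall>j. \<rho> j \<noteq> i) \<Longrightarrow> good (ins_plus i \<rho>) \<Longrightarrow> good (stdz i \<rho>)
     \<Longrightarrow> good (ins_minus i \<rho>)"

definition yv :: "(nat \<Rightarrow> nat) \<Rightarrow> var \<Rightarrow> var mpoly" where
  "yv \<rho> = (\<lambda>v. case v of X j \<Rightarrow> Var (T (\<rho> j)) | T j \<Rightarrow> Var (T j))"

lemma ev_yv: "ev \<rho> = psubst (yv \<rho>)"
  by (simp add: ev_def yv_def)

lemma ev_Rplus: "psubst (yv \<rho>) (Rplus i f) = ev (ins_plus i \<rho>) f"
  unfolding Rplus_def psubst_comp ev_yv
  by (rule arg_cong[where f="\<lambda>s. psubst s f"]) (auto simp: yv_def ins_plus_def split: var.split)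

lemma ev_Rminus: "psubst (yv \<rho>) (Rminus i f) = ev (ins_minus i \<rho>) f"
  unfolding Rminus_def psubst_comp ev_yv
  by (rule arg_cong[where f="\<lambda>s. psubst s f"]) (auto simp: yv_def ins_minus_def split: var.split)

lemma ev_that: assumes "\<forall>j. \<rho> j \<noteq> i"
  shows "psubst (yv \<rho>) (that i g) = that i (ev (stdz i \<rho>) g)"
  unfolding that_def psubst_comp ev_yv
proof (rule arg_cong[where f="\<lambda>s. psubst s g"], rule ext)
  fix v show "psubst (yv \<rho>) (case v of X j \<Rightarrow> Var (X j) | T j \<Rightarrow> if j < i then Var (T j) else Var (T (Suc j))) =
    psubst (\<lambda>v. case v of X j \<Rightarrow> Var (X j) | T j \<Rightarrow> if j < i then Var (T j) else Var (T (Suc j))) (yv (stdz i \<rho>) v)"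
  proof (cases v)
    case (X j)
    with assms[rule_format, of j] show ?thesis by (auto simp: yv_def stdz_def)
  qed (auto simp: yv_def stdz_def)
qed

lemma step_identity:
  assumes fam: "is_double_forest_family P" and F: "is_forest F" and nz: "\<forall>j. \<rho> j \<noteq> i"
  shows "ev (ins_plus i \<rho>) (P F) = ev (ins_minus i \<rho>) (P F) +
     (Var (T (\<rho> i)) - Var (T i)) * (if i \<in> Qdes F then that i (ev (stdz i \<rho>) (P (fcontract F i))) else 0)"
proof -
  have e: "(Var (X i) - Var (T i)) * (if i \<in> Qdes F then that i (P (fcontract F i)) else 0)
        = Rplus i (P F) - Rminus i (P F)"
    using fam F unfolding is_double_forest_family_def by blast
  let ?L = "(Var (X i) - Var (T i)) * (if i \<in> Qdes F then that i (P (fcontract F i)) else 0)"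
  let ?X = "(Var (T (\<rho> i)) - Var (T i)) * (if i \<in> Qdes F then that i (ev (stdz i \<rho>) (P (fcontract F i))) else 0)"
  have l: "psubst (yv \<rho>) ?L = ?X"
    by (simp add: psubst_mult psubst_diff ev_that[OF nz]) (simp add: yv_def)
  have r: "psubst (yv \<rho>) (Rplus i (P F) - Rminus i (P F)) = ev (ins_plus i \<rho>) (P F) - ev (ins_minus i \<rho>) (P F)"
    by (simp add: psubst_diff ev_Rplus ev_Rminus)
  from e have "psubst (yv \<rho>) ?L = psubst (yv \<rho>) (Rplus i (P F) - Rminus i (P F))" by (rule arg_cong)
  then have eq: "?X = ev (ins_plus i \<rho>) (P F) - ev (ins_minus i \<rho>) (P F)" by (simp only: l r)
  show ?thesis unfolding eq by simp
qed

lemma forest_fcontract: "is_forest F \<Longrightarrow> is_forest (fcontract F i)"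
proof -
  assume "is_forest F"
  obtain j t where eq: "fcontract F i = F(j := t)" unfolding fcontract_def Let_def by blast
  have "{k. (F(j := t)) k \<noteq> Lf} \<subseteq> insert j {k. F k \<noteq> Lf}" by auto
  then show ?thesis using \<open>is_forest F\<close> unfolding is_forest_def eq by (meson finite_insert finite_subset)
qed

lemma good_gp:
  assumes fam: "is_double_forest_family P"
  shows "good \<sigma> \<Longrightarrow> \<forall>F. is_forest F \<longrightarrow> gp (ev \<sigma> (P F))"
proof (induction rule: good.induct)
  case good_id
  show ?case
  proof (intro allI impI)
    fix F assume "is_forest F"
    then have "eval_tt (P F) = (if F = empty_forest then 1 else 0)"
      using fam unfolding is_double_forest_family_def by blast
    moreover have "ev (\<lambda>k. k) (P F) = eval_tt (P F)" by (simp add: ev_def eval_tt_def)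
    ultimately show "gp (ev (\<lambda>k. k) (P F))" using gp_zero gp_one by simp
  qed
next
  case (goodA i \<rho>)
  show ?case
  proof (intro allI impI)
    fix F assume F: "is_forest F"
    let ?E = "(if i \<in> Qdes F then that i (ev (stdz i \<rho>) (P (fcontract F i))) else 0)"
    have "gp ?E" using goodA.IH(2) forest_fcontract[OF F] gp_that gp_zero by simp
    moreover have "gp (Var (T (\<rho> i)) - Var (T i))" using goodA.hyps(1) by (simp add: gp_diff)
    ultimately have "gp (ev (ins_minus i \<rho>) (P F) + (Var (T (\<rho> i)) - Var (T i)) * ?E)"
      using goodA.IH(1) F by (blast intro: gp_add gp_mult)
    then show "gp (ev (ins_plus i \<rho>) (P F))"
      using step_identity[OF fam F goodA.hyps(2)] by simp
  qed
next
  case (goodB \<rho> i)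
  show ?case
  proof (intro allI impI)
    fix F assume F: "is_forest F"
    let ?E = "(if i \<in> Qdes F then that i (ev (stdz i \<rho>) (P (fcontract F i))) else 0)"
    have "gp ?E" using goodB.IH(2) forest_fcontract[OF F] gp_that gp_zero by simp
    moreover have "gp (Var (T i) - Var (T (\<rho> i)))" using goodB.hyps(1) by (simp add: gp_diff)
    ultimately have "gp (ev (ins_plus i \<rho>) (P F) + (Var (T i) - Var (T (\<rho> i))) * ?E)"
      using goodB.IH(1) F by (blast intro: gp_add gp_mult)
    moreover have "ev (ins_minus i \<rho>) (P F) = ev (ins_plus i \<rho>) (P F) + (Var (T i) - Var (T (\<rho> i))) * ?E"
      using step_identity[OF fam F goodB.hyps(2)] by (simp add: algebra_simps)
    ultimately show "gp (ev (ins_minus i \<rho>) (P F))" by simp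
  qed
qed

lemma part_iff: "partition_on A Ps \<longleftrightarrow> (\<forall>B\<in>Ps. B \<noteq> {} \<and> B \<subseteq> A) \<and> (\<forall>k\<in>A. \<exists>B\<in>Ps. k \<in> B)
   \<and> (\<forall>B\<in>Ps. \<forall>C\<in>Ps. \<forall>k. k \<in> B \<longrightarrow> k \<in> C \<longrightarrow> B = C)"
proof
  assume p: "partition_on A Ps"
  have u: "\<Union>Ps = A" and d: "\<And>B C. B \<in> Ps \<Longrightarrow> C \<in> Ps \<Longrightarrow> B \<noteq> C \<Longrightarrow> B \<inter> C = {}"
     and e: "{} \<notin> Ps"
    using p unfolding partition_on_def pairwise_def disjnt_def by auto
  show "(\<forall>B\<in>Ps. B \<noteq> {} \<and> B \<subseteq> A) \<and> (\<forall>k\<in>A. \<exists>B\<in>Ps. k \<in> B)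
   \<and> (\<forall>B\<in>Ps. \<forall>C\<in>Ps. \<forall>k. k \<in> B \<longrightarrow> k \<in> C \<longrightarrow> B = C)"
  proof (intro conjI ballI allI impI)
    fix B assume "B \<in> Ps" then show "B \<noteq> {}" using e by auto
  next
    fix B assume "B \<in> Ps" then show "B \<subseteq> A" using u by auto
  next
    fix k assume "k \<in> A" then show "\<exists>B\<in>Ps. k \<in> B" using u by auto
  next
    fix B C k assume "B \<in> Ps" "C \<in> Ps" "k \<in> B" "k \<in> C"
    then show "B = C" using d by auto
  qed
next
  assume h: "(\<forall>B\<in>Ps. B \<noteq> {} \<and> B \<subseteq> A) \<and> (\<forall>k\<in>A. \<exists>B\<in>Ps. k \<in> B)
   \<and> (\<forall>B\<in>Ps. \<forall>C\<in>Ps. \<forall>k. k \<in> B \<longrightarrow> k \<in> C \<longrightarrow> B = C)"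
  show "partition_on A Ps" unfolding partition_on_def pairwise_def disjnt_def
  proof (intro conjI ballI impI)
    show "\<Union>Ps = A" using h by auto
    show "{} \<notin> Ps" using h by auto
    fix B C assume BC: "B \<in> Ps" "C \<in> Ps" "B \<noteq> C"
    show "B \<inter> C = {}"
    proof (rule ccontr)
      assume "B \<inter> C \<noteq> {}"
      then obtain k where "k \<in> B" "k \<in> C" by blast
      then have "B = C" using h BC(1,2) by blast
      with BC(3) show False by simp
    qed
  qed
qed


lemma part_uniq: "partition_on A Ps \<Longrightarrow> B \<in> Ps \<Longrightarrow> C \<in> Ps \<Longrightarrow> k \<in> B \<Longrightarrow> k \<in> C \<Longrightarrow> B = C"
  unfolding part_iff by (elim conjE) (drule bspec, assumption, drule bspec, assumption, simp)

lemma part_sub: "partition_on A Ps \<Longrightarrow> B \<in> Ps \<Longrightarrow> B \<subseteq> A"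
  unfolding part_iff by (elim conjE) simp

lemma part_ne: "partition_on A Ps \<Longrightarrow> B \<in> Ps \<Longrightarrow> B \<noteq> {}"
  unfolding part_iff by (elim conjE) simp

lemma part_cover: "partition_on A Ps \<Longrightarrow> k \<in> A \<Longrightarrow> \<exists>B\<in>Ps. k \<in> B"
  unfolding part_iff by (elim conjE) simp

definition cyc :: "nat set \<Rightarrow> nat \<Rightarrow> nat" where
  "cyc B k = (if k = Min B then Max B else Max {b\<in>B. b < k})"

lemma nc_perm_blk:
  assumes p: "partition_on {..<n} Ps" and B: "B \<in> Ps" "k \<in> B"
  shows "nc_perm n Ps k = cyc B k"
proof -
  have kn: "k < n" using part_sub[OF p B(1)] B(2) by auto
  have "(THE B. B \<in> Ps \<and> k \<in> B) = B"
  proof (rule the_equality)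
    show "B \<in> Ps \<and> k \<in> B" using B by simp
    fix C assume "C \<in> Ps \<and> k \<in> C"
    then show "C = B" using part_uniq[OF p] B by blast
  qed
  then show ?thesis using kn by (simp add: nc_perm_def cyc_def Let_def)
qed

lemma nc_perm_ge: "n \<le> k \<Longrightarrow> nc_perm n Ps k = k"
  by (simp add: nc_perm_def)

lemma part_finite: "partition_on {..<(n::nat)} Ps \<Longrightarrow> B \<in> Ps \<Longrightarrow> finite B \<and> B \<noteq> {}"
proof -
  assume p: "partition_on {..<n} Ps" and B: "B \<in> Ps"
  have "B \<subseteq> {..<n}" using part_sub[OF p B] .
  then have "finite B" using finite_subset by blast
  then show ?thesis using part_ne[OF p B] by simp
qed

lemma min_lt: "finite B \<Longrightarrow> k \<in> B \<Longrightarrow> k \<noteq> Min B \<Longrightarrow> Min B < k \<and> Min B \<in> B"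
proof -
  assume f: "finite B" and k: "k \<in> B" and nm: "k \<noteq> Min B"
  have "Min B \<le> k" using f k by simp
  then have "Min B < k" using nm by (simp add: le_neq_implies_less)
  moreover have "B \<noteq> {}" using k by auto
  ultimately show ?thesis using Min_in[OF f] by simp
qed

lemma cyc_lt: "finite B \<Longrightarrow> k \<in> B \<Longrightarrow> k \<noteq> Min B \<Longrightarrow> cyc B k < k \<and> (\<forall>b\<in>B. b < k \<longrightarrow> b \<le> cyc B k) \<and> cyc B k \<in> B"
proof -
  assume f: "finite B" and k: "k \<in> B" and nm: "k \<noteq> Min B"
  have "Min B \<in> {b\<in>B. b < k}" using min_lt[OF f k nm] by simp
  then have ne: "{b\<in>B. b < k} \<noteq> {}" by blast
  have ff: "finite {b\<in>B. b < k}" using f by simp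
  have "Max {b\<in>B. b < k} \<in> {b\<in>B. b < k}" using Max_in[OF ff ne] .
  moreover have "\<forall>b\<in>B. b < k \<longrightarrow> b \<le> Max {b\<in>B. b < k}" using Max_ge[OF ff] by simp
  ultimately show ?thesis using nm by (simp add: cyc_def)
qed

lemma cyc_in: "finite B \<Longrightarrow> k \<in> B \<Longrightarrow> cyc B k \<in> B"
proof -
  assume f: "finite B" and k: "k \<in> B"
  show ?thesis
  proof (cases "k = Min B")
    case True
    have "B \<noteq> {}" using k by auto
    then show ?thesis using True Max_in[OF f] by (simp add: cyc_def)
  next
    case False
    then show ?thesis using cyc_lt[OF f k] by simp
  qed
qed

lemma cyc_min: "k = Min B \<Longrightarrow> cyc B k = Max B"
  by (simp add: cyc_def)

lemma cyc_inj: "finite B \<Longrightarrow> inj_on (cyc B) B"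
proof -
  assume f: "finite B"
  have key: "x = y" if x: "x \<in> B" and y: "y \<in> B" and e: "cyc B x = cyc B y" and xy: "x < y" for x y
  proof -
    have "Min B \<le> x" using f x by simp
    then have "y \<noteq> Min B" using xy by linarith
    then have A: "cyc B y < y \<and> x \<le> cyc B y" using cyc_lt[OF f y] x xy by blast
    show "x = y"
    proof (cases "x = Min B")
      case True
      then have "cyc B x = Max B" by (simp add: cyc_def)
      moreover have "y \<le> Max B" using f y by simp
      ultimately show ?thesis using A e by linarith
    next
      case False
      then show ?thesis using cyc_lt[OF f x] A e by linarith
    qed
  qed
  show ?thesis
  proof (rule inj_onI)
    fix x y assume x: "x \<in> B" and y: "y \<in> B" and e: "cyc B x = cyc B y"
    show "x = y"
    proof (cases x y rule: linorder_cases)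
      case less then show ?thesis using key x y e by blast
    next
      case equal then show ?thesis .
    next
      case greater then show ?thesis using key[OF y x e[symmetric]] by simp
    qed
  qed
qed

lemma nc_perm_in: assumes p: "partition_on {..<n} Ps" and B: "B \<in> Ps" "x \<in> B"
  shows "nc_perm n Ps x \<in> B"
proof -
  have fB: "finite B" using part_finite[OF p B(1)] by blast
  show ?thesis using nc_perm_blk[OF p B] cyc_in[OF fB B(2)] by simp
qed

lemma nc_perm_inj: assumes p: "partition_on {..<n} Ps" shows "inj (nc_perm n Ps)"
proof (rule injI)
  fix x y assume e: "nc_perm n Ps x = nc_perm n Ps y"
  have lt: "nc_perm n Ps z < n" if "z < n" for z
  proof -
    obtain B where B: "B \<in> Ps" "z \<in> B" using part_cover[OF p] \<open>z < n\<close> by auto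
    have "B \<subseteq> {..<n}" using part_sub[OF p B(1)] .
    then show ?thesis using nc_perm_in[OF p B] by auto
  qed
  show "x = y"
  proof (cases "x < n")
    case True
    then obtain B where B: "B \<in> Ps" "x \<in> B" using part_cover[OF p] by auto
    have fB: "finite B" using part_finite[OF p B(1)] by blast
    show ?thesis
    proof (cases "y < n")
      case True
      then obtain C where C: "C \<in> Ps" "y \<in> C" using part_cover[OF p] by auto
      have "nc_perm n Ps x \<in> C" using nc_perm_in[OF p C] e by simp
      then have BC: "B = C" using part_uniq[OF p B(1) C(1)] nc_perm_in[OF p B] by blast
      have "cyc B x = cyc B y" using e nc_perm_blk[OF p B] nc_perm_blk[OF p C] BC by simp
      then show ?thesis using inj_onD[OF cyc_inj[OF fB]] B(2) C(2) BC by blast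
    next
      case False
      then have "nc_perm n Ps y = y" by (simp add: nc_perm_ge)
      then show ?thesis using lt[OF True] e False by simp
    qed
  next
    case False
    then have x: "nc_perm n Ps x = x" by (simp add: nc_perm_ge)
    show ?thesis
    proof (cases "y < n")
      case True
      then show ?thesis using lt[OF True] e False x by simp
    next
      case False
      then show ?thesis using x e by (simp add: nc_perm_ge)
    qed
  qed
qed

lemma cyc_image:
  assumes m: "mono \<mu>" and inj: "inj_on \<mu> C" and f: "finite C" and y: "y \<in> C"
  shows "cyc (\<mu> ` C) (\<mu> y) = \<mu> (cyc C y)"
proof -
  have ne: "C \<noteq> {}" using y by auto
  have lt: "\<mu> b < \<mu> y \<longleftrightarrow> b < y" if b: "b \<in> C" for b
  proof
    assume a: "\<mu> b < \<mu> y"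
    show "b < y"
    proof (rule ccontr)
      assume "\<not> b < y"
      then have "\<mu> y \<le> \<mu> b" using m by (simp add: monoD)
      with a show False by simp
    qed
  next
    assume "b < y"
    then have "\<mu> b \<le> \<mu> y" using m by (simp add: monoD)
    moreover have "\<mu> b \<noteq> \<mu> y"
    proof
      assume "\<mu> b = \<mu> y"
      then have "b = y" using inj_on_eq_iff[OF inj b y] by simp
      with \<open>b < y\<close> show False by simp
    qed
    ultimately show "\<mu> b < \<mu> y" by simp
  qed
  have minc: "Min (\<mu> ` C) = \<mu> (Min C)" using mono_Min_commute[OF m f ne] by simp
  have maxc: "Max (\<mu> ` C) = \<mu> (Max C)" using mono_Max_commute[OF m f ne] by simp
  have mineq: "\<mu> y = \<mu> (Min C) \<longleftrightarrow> y = Min C"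
    using inj_on_eq_iff[OF inj y Min_in[OF f ne]] .
  show ?thesis
  proof (cases "y = Min C")
    case True then show ?thesis by (simp add: cyc_def minc maxc)
  next
    case False
    have "Min C \<le> y" using f y by simp
    then have "Min C \<in> {b\<in>C. b < y}" using False Min_in[OF f ne] by auto
    then have ne2: "{b\<in>C. b < y} \<noteq> {}" by blast
    have "{b \<in> \<mu> ` C. b < \<mu> y} = \<mu> ` {b\<in>C. b < y}" by (auto simp: lt)
    moreover have "Max (\<mu> ` {b\<in>C. b < y}) = \<mu> (Max {b\<in>C. b < y})"
      using mono_Max_commute[OF m _ ne2] f by simp
    ultimately show ?thesis using False mineq by (simp add: cyc_def minc)
  qed
qed

lemma img_part:
  assumes p: "partition_on A Ps" and img: "\<mu> ` A = {..<n'}"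
    and uniq: "\<And>B C y y'. B \<in> Ps \<Longrightarrow> C \<in> Ps \<Longrightarrow> y \<in> B \<Longrightarrow> y' \<in> C \<Longrightarrow> \<mu> y = \<mu> y' \<Longrightarrow> B = C"
  shows "partition_on {..<n'} ((`) \<mu> ` Ps)"
  unfolding part_iff
proof (intro conjI ballI allI impI)
  fix B' assume "B' \<in> (`) \<mu> ` Ps"
  then obtain B where B: "B \<in> Ps" "B' = \<mu> ` B" by blast
  show "B' \<noteq> {}" using part_ne[OF p B(1)] B(2) by simp
  show "B' \<subseteq> {..<n'}" using part_sub[OF p B(1)] B(2) img by blast
next
  fix k assume "k \<in> {..<n'}"
  then obtain y where y: "y \<in> A" "k = \<mu> y" using img by (metis imageE)
  obtain B where "B \<in> Ps" "y \<in> B" using part_cover[OF p y(1)] by blast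
  then show "\<exists>B'\<in>(`) \<mu> ` Ps. k \<in> B'" using y(2) by blast
next
  fix B' C' k assume B': "B' \<in> (`) \<mu> ` Ps" and C': "C' \<in> (`) \<mu> ` Ps" and k: "k \<in> B'" "k \<in> C'"
  obtain B where B: "B \<in> Ps" "B' = \<mu> ` B" using B' by blast
  obtain C where C: "C \<in> Ps" "C' = \<mu> ` C" using C' by blast
  obtain y where y: "y \<in> B" "k = \<mu> y" using k(1) B(2) by blast
  obtain y' where y': "y' \<in> C" "k = \<mu> y'" using k(2) C(2) by blast
  have "B = C" using uniq[OF B(1) C(1) y(1) y'(1)] y(2) y'(2) by simp
  then show "B' = C'" using B C by simp
qed

lemma img_nc:
  assumes m: "mono \<mu>" and nc: "noncrossing Ps"
  shows "noncrossing ((`) \<mu> ` Ps)"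
  unfolding noncrossing_def
proof (rule notI, elim bexE exE conjE)
  fix P' Q' a b c d
  assume P': "P' \<in> (`) \<mu> ` Ps" and Q': "Q' \<in> (`) \<mu> ` Ps" and ne: "P' \<noteq> Q'"
    and a: "a \<in> P'" and b: "b \<in> P'" and c: "c \<in> Q'" and d: "d \<in> Q'"
    and o: "a < c" "c < b" "b < d"
  obtain P where P: "P \<in> Ps" "P' = \<mu> ` P" using P' by blast
  obtain Q where Q: "Q \<in> Ps" "Q' = \<mu> ` Q" using Q' by blast
  obtain a0 where a0: "a0 \<in> P" "a = \<mu> a0" using a P by blast
  obtain b0 where b0: "b0 \<in> P" "b = \<mu> b0" using b P by blast
  obtain c0 where c0: "c0 \<in> Q" "c = \<mu> c0" using c Q by blast
  obtain d0 where d0: "d0 \<in> Q" "d = \<mu> d0" using d Q by blast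
  have lt: "\<mu> x < \<mu> y \<Longrightarrow> x < y" for x y
  proof (rule ccontr)
    assume "\<mu> x < \<mu> y" "\<not> x < y"
    then have "\<mu> y \<le> \<mu> x" using m by (simp add: monoD)
    with \<open>\<mu> x < \<mu> y\<close> show False by simp
  qed
  have o1: "a0 < c0" using lt[of a0 c0] o(1) a0(2) c0(2) by simp
  have o2: "c0 < b0" using lt[of c0 b0] o(2) b0(2) c0(2) by simp
  have o3: "b0 < d0" using lt[of b0 d0] o(3) b0(2) d0(2) by simp
  have PQ: "P \<noteq> Q" using ne P(2) Q(2) by auto
  have X: "P \<noteq> Q \<and> (\<exists>a b c d. a \<in> P \<and> b \<in> P \<and> c \<in> Q \<and> d \<in> Q \<and> a < c \<and> c < b \<and> b < d)"
    by (rule conjI[OF PQ], rule exI[of _ a0], rule exI[of _ b0], rule exI[of _ c0], rule exI[of _ d0])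
       (simp add: a0(1) b0(1) c0(1) d0(1) o1 o2 o3)
  have "\<exists>P\<in>Ps. \<exists>Q\<in>Ps. P \<noteq> Q \<and> (\<exists>a b c d. a \<in> P \<and> b \<in> P \<and> c \<in> Q \<and> d \<in> Q \<and> a < c \<and> c < b \<and> b < d)"
    by (rule bexI[where x=P], rule bexI[where x=Q], rule X, rule Q(1), rule P(1))
  then show False by (rule notE[OF nc[unfolded noncrossing_def]])
qed

definition dd :: "nat \<Rightarrow> nat \<Rightarrow> nat" where
  "dd x y = (x - y)^2 + (y - x)^2"

definition msr :: "nat \<Rightarrow> (nat \<Rightarrow> nat) \<Rightarrow> nat" where
  "msr n f = (\<Sum>k<n. dd (f k) k)"

lemma msr_split: "Suc i < n \<Longrightarrow> msr n f = dd (f i) i + dd (f (Suc i)) (Suc i) + (\<Sum>k\<in>{..<n} - {i, Suc i}. dd (f k) k)"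
proof -
  assume "Suc i < n"
  then have "i \<in> {..<n}" "Suc i \<in> {..<n} - {i}" by auto
  then have "msr n f = dd (f i) i + (dd (f (Suc i)) (Suc i) + (\<Sum>k\<in>{..<n} - {i} - {Suc i}. dd (f k) k))"
    unfolding msr_def by (simp add: sum.remove[of _ i] sum.remove[of _ "Suc i"])
  moreover have "{..<n} - {i} - {Suc i} = {..<n} - {i, Suc i}" by auto
  ultimately show ?thesis by simp
qed

lemma msr_less:
  assumes "Suc i < n" and "\<And>k. k \<noteq> i \<Longrightarrow> k \<noteq> Suc i \<Longrightarrow> f k = g k"
    and "dd (f i) i + dd (f (Suc i)) (Suc i) < dd (g i) i + dd (g (Suc i)) (Suc i)"
  shows "msr n f < msr n g"
proof -
  have "(\<Sum>k\<in>{..<n} - {i, Suc i}. dd (f k) k) = (\<Sum>k\<in>{..<n} - {i, Suc i}. dd (g k) k)"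
    using assms(2) by (intro sum.cong) auto
  then show ?thesis using msr_split[OF assms(1), of f] msr_split[OF assms(1), of g] assms(3) by linarith
qed

lemma Max_remove_big: "finite S \<Longrightarrow> s \<in> S \<Longrightarrow> x < s \<Longrightarrow> Max (S - {x}) = Max S"
proof -
  assume f: "finite S" and s: "s \<in> S" and xs: "x < s"
  have "s \<le> Max S" using f s by simp
  then have "Max S \<in> S - {x}" using Max_in[OF f] s xs by auto
  moreover have "\<forall>y\<in>S - {x}. y \<le> Max S" using f by simp
  ultimately show ?thesis using f by (intro Max_eqI) auto
qed

lemma part_split:
  assumes p: "partition_on A Ps" and B: "B \<in> Ps" and u: "B1 \<union> B2 = B" and d: "B1 \<inter> B2 = {}"
    and n1: "B1 \<noteq> {}" and n2: "B2 \<noteq> {}"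
  shows "partition_on A (insert B1 (insert B2 (Ps - {B})))"
  unfolding part_iff
proof (intro conjI ballI allI impI)
  fix C assume C: "C \<in> insert B1 (insert B2 (Ps - {B}))"
  have "B \<subseteq> A" using part_sub[OF p B] .
  then show "C \<noteq> {}" "C \<subseteq> A" using C n1 n2 u part_ne[OF p] part_sub[OF p] by auto
next
  fix k assume k: "k \<in> A"
  obtain C where C: "C \<in> Ps" "k \<in> C" using part_cover[OF p k] by blast
  show "\<exists>C\<in>insert B1 (insert B2 (Ps - {B})). k \<in> C"
  proof (cases "C = B")
    case True then show ?thesis using C u by auto
  next
    case False then show ?thesis using C by auto
  qed
next
  fix C D k assume C: "C \<in> insert B1 (insert B2 (Ps - {B}))" and D: "D \<in> insert B1 (insert B2 (Ps - {B}))"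
    and k: "k \<in> C" "k \<in> D"
  have sub: "\<And>X. X \<in> Ps - {B} \<Longrightarrow> k \<in> X \<Longrightarrow> k \<in> B \<Longrightarrow> False"
    using part_uniq[OF p _ B] by blast
  show "C = D"
  proof -
    consider "C = B1" | "C = B2" | "C \<in> Ps - {B}" using C by blast
    moreover consider "D = B1" | "D = B2" | "D \<in> Ps - {B}" using D by blast
    ultimately show ?thesis
      using k d u sub part_uniq[OF p, of C D k] by (smt (verit) Diff_iff Int_iff UnCI empty_iff)
  qed
qed

lemma part_merge:
  assumes p: "partition_on A Ps" and B: "B \<in> Ps" and C: "C \<in> Ps" and BC: "B \<noteq> C"
  shows "partition_on A (insert (B \<union> C) (Ps - {B, C}))"
  unfolding part_iff
proof (intro conjI ballI allI impI)
  fix X assume X: "X \<in> insert (B \<union> C) (Ps - {B, C})"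
  show "X \<noteq> {}" using X part_ne[OF p] B by auto
  show "X \<subseteq> A" using X part_sub[OF p] B C by auto
next
  fix k assume k: "k \<in> A"
  obtain X where X: "X \<in> Ps" "k \<in> X" using part_cover[OF p k] by blast
  show "\<exists>X\<in>insert (B \<union> C) (Ps - {B, C}). k \<in> X"
  proof (cases "X = B \<or> X = C")
    case True then show ?thesis using X by auto
  next
    case False then show ?thesis using X by auto
  qed
next
  fix X Y k assume X: "X \<in> insert (B \<union> C) (Ps - {B, C})" and Y: "Y \<in> insert (B \<union> C) (Ps - {B, C})"
    and k: "k \<in> X" "k \<in> Y"
  have sub: "\<And>Z. Z \<in> Ps - {B, C} \<Longrightarrow> k \<in> Z \<Longrightarrow> k \<in> B \<union> C \<Longrightarrow> False"
    using part_uniq[OF p _ B] part_uniq[OF p _ C] by blast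
  show "X = Y"
  proof (cases "X = B \<union> C")
    case True
    show ?thesis
    proof (cases "Y = B \<union> C")
      case True then show ?thesis using \<open>X = B \<union> C\<close> by simp
    next
      case False then have "Y \<in> Ps - {B, C}" using Y by simp
      then show ?thesis using sub k \<open>X = B \<union> C\<close> by blast
    qed
  next
    case False then have XP: "X \<in> Ps - {B, C}" using X by simp
    show ?thesis
    proof (cases "Y = B \<union> C")
      case True then show ?thesis using sub k XP by blast
    next
      case False then have "Y \<in> Ps - {B, C}" using Y by simp
      then show ?thesis using part_uniq[OF p, of X Y k] XP k by blast
    qed
  qed
qed

lemma part_remove_single:
  assumes p: "partition_on A Ps" and i: "{i} \<in> Ps"
  shows "partition_on (A - {i}) (Ps - {{i}})"
  unfolding part_iff
proof (intro conjI ballI allI impI)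
  fix X assume X: "X \<in> Ps - {{i}}"
  show "X \<noteq> {}" using X part_ne[OF p] by auto
  have "i \<notin> X" using X part_uniq[OF p _ i, of X i] by auto
  then show "X \<subseteq> A - {i}" using X part_sub[OF p] by auto
next
  fix k assume k: "k \<in> A - {i}"
  obtain X where X: "X \<in> Ps" "k \<in> X" using part_cover[OF p] k by blast
  then show "\<exists>X\<in>Ps - {{i}}. k \<in> X" using k by auto
next
  fix X Y k assume "X \<in> Ps - {{i}}" "Y \<in> Ps - {{i}}" "k \<in> X" "k \<in> Y"
  then show "X = Y" using part_uniq[OF p, of X Y k] by simp
qed

lemma nc_subset: assumes nc: "noncrossing Ps" and sub: "Ps' \<subseteq> Ps" shows "noncrossing Ps'"
  unfolding noncrossing_def
proof (rule notI, elim bexE)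
  fix P Q assume P: "P \<in> Ps'" and Q: "Q \<in> Ps'"
    and X: "P \<noteq> Q \<and> (\<exists>a b c d. a \<in> P \<and> b \<in> P \<and> c \<in> Q \<and> d \<in> Q \<and> a < c \<and> c < b \<and> b < d)"
  have "\<exists>P\<in>Ps. \<exists>Q\<in>Ps. P \<noteq> Q \<and> (\<exists>a b c d. a \<in> P \<and> b \<in> P \<and> c \<in> Q \<and> d \<in> Q \<and> a < c \<and> c < b \<and> b < d)"
    by (rule bexI[where x=P], rule bexI[where x=Q], rule X) (use P Q sub in auto)
  then show False by (rule notE[OF nc[unfolded noncrossing_def]])
qed

lemma nc_transfer:
  assumes nc: "noncrossing Ps"
    and par: "\<And>P x y. P \<in> Ps' \<Longrightarrow> x \<in> P \<Longrightarrow> y \<in> P \<Longrightarrow> x \<noteq> y \<Longrightarrow> f P \<in> Ps \<and> g ` P \<subseteq> f P"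
    and dist: "\<And>P Q x y u v. P \<in> Ps' \<Longrightarrow> Q \<in> Ps' \<Longrightarrow> P \<noteq> Q \<Longrightarrow> x \<in> P \<Longrightarrow> y \<in> P \<Longrightarrow> x \<noteq> y
        \<Longrightarrow> u \<in> Q \<Longrightarrow> v \<in> Q \<Longrightarrow> u \<noteq> v \<Longrightarrow> f P \<noteq> f Q"
    and ord: "\<And>P Q x y. P \<in> Ps' \<Longrightarrow> Q \<in> Ps' \<Longrightarrow> P \<noteq> Q \<Longrightarrow> x \<in> P \<Longrightarrow> y \<in> Q \<Longrightarrow> x < y \<Longrightarrow> g x < g y"
  shows "noncrossing Ps'"
  unfolding noncrossing_def
proof (rule notI, elim bexE exE conjE)
  fix P Q a b c d
  assume P: "P \<in> Ps'" and Q: "Q \<in> Ps'" and ne: "P \<noteq> Q"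
    and a: "a \<in> P" and b: "b \<in> P" and c: "c \<in> Q" and d: "d \<in> Q"
    and o: "a < c" "c < b" "b < d"
  have ab: "a \<noteq> b" using o by simp
  have cd: "c \<noteq> d" using o by simp
  have fP: "f P \<in> Ps" "g ` P \<subseteq> f P" using par[OF P a b ab] by auto
  have fQ: "f Q \<in> Ps" "g ` Q \<subseteq> f Q" using par[OF Q c d cd] by auto
  have fPQ: "f P \<noteq> f Q" using dist[OF P Q ne a b ab c d cd] .
  have o1: "g a < g c" using ord[OF P Q ne a c o(1)] .
  have o2: "g c < g b" using ord[OF Q P ne[symmetric] c b o(2)] .
  have o3: "g b < g d" using ord[OF P Q ne b d o(3)] .
  have X: "f P \<noteq> f Q \<and> (\<exists>a b c d. a \<in> f P \<and> b \<in> f P \<and> c \<in> f Q \<and> d \<in> f Q \<and> a < c \<and> c < b \<and> b < d)"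
    by (rule conjI[OF fPQ], rule exI[of _ "g a"], rule exI[of _ "g b"], rule exI[of _ "g c"], rule exI[of _ "g d"])
       (use fP(2) fQ(2) a b c d o1 o2 o3 in auto)
  have "\<exists>P\<in>Ps. \<exists>Q\<in>Ps. P \<noteq> Q \<and> (\<exists>a b c d. a \<in> P \<and> b \<in> P \<and> c \<in> Q \<and> d \<in> Q \<and> a < c \<and> c < b \<and> b < d)"
    by (rule bexI[where x="f P"], rule bexI[where x="f Q"], rule X, rule fQ(1), rule fP(1))
  then show False by (rule notE[OF nc[unfolded noncrossing_def]])
qed

lemma Max_remove_other: "finite S \<Longrightarrow> S \<noteq> {} \<Longrightarrow> Max S \<noteq> x \<Longrightarrow> Max (S - {x}) = Max S"
proof -
  assume f: "finite S" and ne: "S \<noteq> {}" and mx: "Max S \<noteq> x"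
  have "Max S \<in> S - {x}" using Max_in[OF f ne] mx by auto
  moreover have "\<forall>y\<in>S - {x}. y \<le> Max S" using f by simp
  ultimately show ?thesis using f by (intro Max_eqI) auto
qed

locale ncs =
  fixes n :: nat and Ps :: "nat set set" and m :: nat and B :: "nat set"
  assumes p: "partition_on {..<n} Ps" and nc: "noncrossing Ps"
    and mn: "m < n" and B: "B \<in> Ps" and mB: "m \<in> B"
    and mlt: "nc_perm n Ps m < m"
    and minim: "\<And>k. k < m \<Longrightarrow> k \<le> nc_perm n Ps k"
begin

abbreviation s where "s \<equiv> nc_perm n Ps"

definition a where "a = s m"

lemma finB: "finite B" using part_finite[OF p B] by simp

lemma sB: "k \<in> B \<Longrightarrow> s k = cyc B k" using nc_perm_blk[OF p B] .

lemma m_nmin: "m \<noteq> Min B"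
proof
  assume "m = Min B"
  then have "s m = Max B" using sB[OF mB] by (simp add: cyc_def)
  moreover have "m \<le> Max B" using finB mB by simp
  ultimately show False using mlt by simp
qed

lemma a_props: "a < m" "a \<in> B" "\<And>b. b \<in> B \<Longrightarrow> b < m \<Longrightarrow> b \<le> a"
  using cyc_lt[OF finB mB m_nmin] sB[OF mB] unfolding a_def by auto

lemma a_min: "a = Min B"
proof (rule ccontr)
  assume "a \<noteq> Min B"
  then have "cyc B a < a" using cyc_lt[OF finB a_props(2)] by simp
  moreover have "a \<le> s a" using minim[OF a_props(1)] .
  ultimately show False using sB[OF a_props(2)] by simp
qed

lemma sa: "s a = Max B" using sB[OF a_props(2)] a_min by (simp add: cyc_def)

lemma maxB: "m \<le> Max B" "Max B \<in> B"
proof -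
  show "m \<le> Max B" using finB mB by simp
  have "B \<noteq> {}" using mB by auto
  then show "Max B \<in> B" using Max_in[OF finB] by simp
qed

lemma B_ge: "b \<in> B \<Longrightarrow> b \<noteq> a \<Longrightarrow> m \<le> b"
proof -
  assume b: "b \<in> B" "b \<noteq> a"
  have "a \<le> b" using a_min finB b(1) by simp
  show "m \<le> b"
  proof (rule ccontr)
    assume "\<not> m \<le> b"
    then have "b \<le> a" using a_props(3)[OF b(1)] by simp
    with \<open>a \<le> b\<close> b(2) show False by simp
  qed
qed

lemma an: "a < n" using a_props(1) mn by simp

lemma s_ge: "n \<le> k \<Longrightarrow> s k = k" by (rule nc_perm_ge)

lemma s_inj: "s x = s y \<Longrightarrow> x = y" using nc_perm_inj[OF p] by (simp add: inj_eq)

lemma s_blk: "C \<in> Ps \<Longrightarrow> k \<in> C \<Longrightarrow> s k = cyc C k" using nc_perm_blk[OF p] .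

lemma blk_of: "k < n \<Longrightarrow> \<exists>C\<in>Ps. k \<in> C" using part_cover[OF p] by simp

lemma notB: "C \<in> Ps \<Longrightarrow> C \<noteq> B \<Longrightarrow> k \<in> C \<Longrightarrow> k \<notin> B"
  using part_uniq[OF p _ B] by blast

lemma sm: "s m = a" by (simp add: a_def)

lemma s_ne_a: "k \<noteq> m \<Longrightarrow> s k \<noteq> a"
  using s_inj sm by metis

end

locale ncsA = ncs +
  assumes am0: "m = Suc (nc_perm n Ps m)"
begin

lemma am: "Suc a = m" using am0 by (simp add: a_def)

lemma m1: "m - 1 = a" using am by simp

definition rA where "rA j = (if j \<le> a then s j else s (Suc j))"

lemma A_plus: "ins_plus a rA = s"
proof
  fix j show "ins_plus a rA j = s j"
  proof (cases "j \<le> a")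
    case True then show ?thesis by (simp add: ins_plus_def rA_def)
  next
    case False
    show ?thesis
    proof (cases "j = Suc a")
      case True then show ?thesis using sm am by (simp add: ins_plus_def)
    next
      case False
      then have "Suc (j - 1) = j" "\<not> j - 1 \<le> a" using \<open>\<not> j \<le> a\<close> by auto
      then show ?thesis using False \<open>\<not> j \<le> a\<close> by (simp add: ins_plus_def rA_def)
    qed
  qed
qed

lemma A_gt: "a < rA a"
  using sa maxB(1) am by (simp add: rA_def)

lemma A_ne: "\<forall>j. rA j \<noteq> a"
proof
  fix j show "rA j \<noteq> a"
  proof (cases "j \<le> a")
    case True
    then have "j \<noteq> m" using am by simp
    then show ?thesis using True s_ne_a by (simp add: rA_def)
  next
    case False
    then have "Suc j \<noteq> m" using am by simp
    then show ?thesis using False s_ne_a by (simp add: rA_def)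
  qed
qed

definition Ps1 where "Ps1 = insert {a} (insert (B - {a}) (Ps - {B}))"

lemma A_part: "partition_on {..<n} Ps1"
  unfolding Ps1_def
  by (rule part_split[OF p B]) (use a_props(2) mB am in auto)

lemma A_nc: "noncrossing Ps1"
proof (rule nc_transfer[OF nc, where f="\<lambda>P. if P \<subseteq> B then B else P" and g="\<lambda>x. x"])
  fix P x y assume P: "P \<in> Ps1" and xy: "x \<in> P" "y \<in> P" "x \<noteq> y"
  show "(if P \<subseteq> B then B else P) \<in> Ps \<and> (\<lambda>x. x) ` P \<subseteq> (if P \<subseteq> B then B else P)"
    using P B a_props(2) unfolding Ps1_def by auto
next
  fix P Q x y u v assume P: "P \<in> Ps1" and Q: "Q \<in> Ps1" and PQ: "P \<noteq> Q"
    and xy: "x \<in> P" "y \<in> P" "x \<noteq> y" and uv: "u \<in> Q" "v \<in> Q" "u \<noteq> v"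
  have nsP: "P \<noteq> {a}" using xy by auto
  have nsQ: "Q \<noteq> {a}" using uv by auto
  have sub: "\<And>X. X \<in> Ps - {B} \<Longrightarrow> \<not> X \<subseteq> B"
  proof
    fix X assume X: "X \<in> Ps - {B}" "X \<subseteq> B"
    obtain z where "z \<in> X" using part_ne[OF p] X(1) by blast
    then show False using notB[of X z] X by auto
  qed
  have cP: "P = B - {a} \<or> P \<in> Ps - {B}" using P nsP unfolding Ps1_def by auto
  have cQ: "Q = B - {a} \<or> Q \<in> Ps - {B}" using Q nsQ unfolding Ps1_def by auto
  show "(if P \<subseteq> B then B else P) \<noteq> (if Q \<subseteq> B then B else Q)"
    using cP cQ sub PQ by auto
next
  fix P Q x y assume "x < y" then show "x < y" .
qed

lemma A_minus_val: "ins_minus a rA k = (if k = a then a else if k = m then Max B else s k)"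
proof (cases "k < a")
  case True then show ?thesis using a_props(1) by (simp add: ins_minus_def rA_def)
next
  case False
  show ?thesis
  proof (cases "k = a")
    case True then show ?thesis by (simp add: ins_minus_def)
  next
    case ka: False
    show ?thesis
    proof (cases "k = m")
      case True then show ?thesis using False ka m1 sa by (simp add: ins_minus_def rA_def)
    next
      case km: False
      have "Suc (k - 1) = k" "\<not> k - 1 \<le> a" using False ka km am by auto
      then show ?thesis using False ka km by (simp add: ins_minus_def rA_def)
    qed
  qed
qed

lemma Bm_min: "Min (B - {a}) = m"
  using B_ge finB mB am by (intro Min_eqI) auto

lemma A_eq_minus: "ins_minus a rA = nc_perm n Ps1"
proof
  fix k show "ins_minus a rA k = nc_perm n Ps1 k"
  proof (cases "n \<le> k")
    case True
    then have "k \<noteq> a" "k \<noteq> m" using an mn by auto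
    then show ?thesis using True s_ge nc_perm_ge[OF True] A_minus_val by simp
  next
    case False
    then have "k < n" by simp
    then obtain C where C: "C \<in> Ps" "k \<in> C" using blk_of by blast
    show ?thesis
    proof (cases "C = B")
      case CB: True
      show ?thesis
      proof (cases "k = a")
        case True
        have "{a} \<in> Ps1" unfolding Ps1_def by simp
        then have "nc_perm n Ps1 k = cyc {a} a" using nc_perm_blk[OF A_part] True by simp
        then show ?thesis using True A_minus_val by (simp add: cyc_def)
      next
        case False
        have blk: "B - {a} \<in> Ps1" unfolding Ps1_def by simp
        have kB: "k \<in> B - {a}" using C CB False by simp
        have e: "nc_perm n Ps1 k = cyc (B - {a}) k" using nc_perm_blk[OF A_part blk kB] .
        have fin: "finite (B - {a})" using finB by simp
        show ?thesis
        proof (cases "k = m")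
          case True
          have "Max (B - {a}) = Max B"
            using Max_remove_big[OF finB mB] a_props(1) by simp
          then show ?thesis using e True Bm_min A_minus_val a_props(1) by (simp add: cyc_def)
        next
          case km: False
          have "m \<le> k" using B_ge kB by simp
          then have mk: "m < k" using km by simp
          have "cyc (B - {a}) k = Max {b \<in> B - {a}. b < k}" using km Bm_min by (simp add: cyc_def)
          also have "{b \<in> B - {a}. b < k} = {b \<in> B. b < k} - {a}" by auto
          also have "Max \<dots> = Max {b \<in> B. b < k}"
            using Max_remove_big[of "{b \<in> B. b < k}" m a] finB mB mk a_props(1) by simp
          also have "\<dots> = s k" using sB kB a_min False by (simp add: cyc_def)
          finally show ?thesis using e A_minus_val False km by simp
        qed
      qed
    next
      case False
      have blk: "C \<in> Ps1" using C False unfolding Ps1_def by simp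
      have "k \<notin> B" using notB[OF C(1) False C(2)] .
      then have "k \<noteq> a" "k \<noteq> m" using a_props(2) mB by auto
      then show ?thesis using nc_perm_blk[OF A_part blk C(2)] s_blk[OF C] A_minus_val by simp
    qed
  qed
qed

lemma A_msr: "msr n (ins_minus a rA) < msr n s"
proof (rule msr_less[where i=a])
  show "Suc a < n" using am mn by simp
  fix k assume "k \<noteq> a" "k \<noteq> Suc a"
  then show "ins_minus a rA k = s k" using A_minus_val am by simp
next
  have c: "Suc a \<le> Max B" using maxB(1) am by simp
  define x where "x = Max B - a"
  have x1: "1 \<le> x" using c by (simp add: x_def)
  have "dd (ins_minus a rA a) a + dd (ins_minus a rA (Suc a)) (Suc a) = (x - 1)^2"
    using A_minus_val am c by (simp add: dd_def x_def)
  also have "\<dots> \<le> x^2" by (simp add: power_mono)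
  also have "\<dots> < dd (s a) a + dd (s (Suc a)) (Suc a)"
    using sa sm am c by (simp add: dd_def x_def)
  finally show "dd (ins_minus a rA a) a + dd (ins_minus a rA (Suc a)) (Suc a) < dd (s a) a + dd (s (Suc a)) (Suc a)" .
qed

end

context ncsA begin

definition muA where "muA k = (if k \<le> a then k else k - 1)"
definition Ps2 where "Ps2 = (`) muA ` Ps"

lemma muA_mono: "mono muA" unfolding muA_def by (rule monoI) auto

lemma muA_img: "muA ` {..<n} = {..<n - 1}"
proof
  show "muA ` {..<n} \<subseteq> {..<n - 1}" using am mn by (auto simp: muA_def)
  show "{..<n - 1} \<subseteq> muA ` {..<n}"
  proof
    fix j assume j: "j \<in> {..<n - 1}"
    show "j \<in> muA ` {..<n}"
    proof (cases "j \<le> a")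
      case True then have "muA j = j" by (simp add: muA_def)
      moreover have "j \<in> {..<n}" using j by simp
      ultimately show ?thesis by (metis image_eqI)
    next
      case False then have "muA (Suc j) = j" by (simp add: muA_def)
      moreover have "Suc j \<in> {..<n}" using j by auto
      ultimately show ?thesis by (metis image_eqI)
    qed
  qed
qed

lemma muA_eq: "muA y = muA y' \<Longrightarrow> y \<noteq> y' \<Longrightarrow> y \<in> {a, m} \<and> y' \<in> {a, m}"
  using am by (auto simp: muA_def split: if_splits)

lemma A2_part: "partition_on {..<n - 1} Ps2"
  unfolding Ps2_def
proof (rule img_part[OF p muA_img])
  fix C D y y' assume C: "C \<in> Ps" and D: "D \<in> Ps" and y: "y \<in> C" and y': "y' \<in> D" and e: "muA y = muA y'"
  show "C = D"
  proof (cases "y = y'")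
    case True then show ?thesis using part_uniq[OF p C D y] y' by simp
  next
    case False
    then have "y \<in> B" "y' \<in> B" using muA_eq[OF e] a_props(2) mB by auto
    then show ?thesis using part_uniq[OF p C B y] part_uniq[OF p D B y'] by simp
  qed
qed

lemma A2_nc: "noncrossing Ps2" unfolding Ps2_def by (rule img_nc[OF muA_mono nc])

lemma A_std: "stdz a rA = nc_perm (n - 1) Ps2"
proof
  fix j show "stdz a rA j = nc_perm (n - 1) Ps2 j"
  proof (cases "n - 1 \<le> j")
    case True
    then have "\<not> j \<le> a" "n \<le> Suc j" using am mn by auto
    then have "rA j = Suc j" using s_ge by (simp add: rA_def)
    then show ?thesis using True \<open>\<not> j \<le> a\<close> by (simp add: stdz_def nc_perm_ge)
  next
    case False
    define y where "y = (if j \<le> a then j else Suc j)"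
    have yn: "y < n" using False y_def by auto
    have ym: "y \<noteq> m" using am y_def by auto
    have muy: "muA y = j" by (simp add: y_def muA_def)
    have ry: "rA j = s y" by (simp add: y_def rA_def)
    obtain C where C: "C \<in> Ps" "y \<in> C" using blk_of[OF yn] by blast
    have fC: "finite C" using part_finite[OF p C(1)] by simp
    have blk: "muA ` C \<in> Ps2" using C(1) by (simp add: Ps2_def)
    have jC: "j \<in> muA ` C" using C(2) muy by (metis image_eqI)
    have e1: "nc_perm (n - 1) Ps2 j = cyc (muA ` C) (muA y)"
      using nc_perm_blk[OF A2_part blk jC] muy by simp
    have sya: "s y \<noteq> a" using s_ne_a[OF ym] .
    have stv: "stdz a rA j = muA (s y)" using ry sya by (auto simp: stdz_def muA_def)
    show ?thesis
    proof (cases "C = B")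
      case False
      have "inj_on muA C"
      proof (rule inj_onI)
        fix x x' assume x: "x \<in> C" and x': "x' \<in> C" and e: "muA x = muA x'"
        show "x = x'"
        proof (rule ccontr)
          assume "x \<noteq> x'"
          then have "x \<in> B" using muA_eq[OF e] a_props(2) mB by auto
          then show False using notB[OF C(1) False x] by simp
        qed
      qed
      then have "cyc (muA ` C) (muA y) = muA (cyc C y)" using cyc_image[OF muA_mono _ fC C(2)] by simp
      then show ?thesis using e1 stv s_blk[OF C] by simp
    next
      case True
      have yB: "y \<in> B - {m}" using C(2) True ym by simp
      have img: "muA ` B = muA ` (B - {m})"
      proof
        show "muA ` (B - {m}) \<subseteq> muA ` B" by auto
        show "muA ` B \<subseteq> muA ` (B - {m})"
        proof
          fix z assume "z \<in> muA ` B"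
          then obtain x where x: "x \<in> B" "z = muA x" by blast
          show "z \<in> muA ` (B - {m})"
          proof (cases "x = m")
            case True
            have "muA m = muA a" using am by (simp add: muA_def)
            moreover have "a \<in> B - {m}" using a_props by simp
            ultimately show ?thesis using x True by force
          next
            case False then show ?thesis using x by simp
          qed
        qed
      qed
      have injB: "inj_on muA (B - {m})"
      proof (rule inj_onI)
        fix x x' assume x: "x \<in> B - {m}" and x': "x' \<in> B - {m}" and e: "muA x = muA x'"
        show "x = x'"
        proof (rule ccontr)
          assume "x \<noteq> x'"
          then have "x \<in> {a, m}" "x' \<in> {a, m}" using muA_eq[OF e] by auto
          then show False using x x' \<open>x \<noteq> x'\<close> by auto
        qed
      qed
      have finBm: "finite (B - {m})" using finB by simp
      have e2: "cyc (muA ` C) (muA y) = muA (cyc (B - {m}) y)"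
        using cyc_image[OF muA_mono injB finBm yB] img True by simp
      have minBm: "Min (B - {m}) = a"
        using a_props a_min finB by (intro Min_eqI) auto
      have goal: "muA (cyc (B - {m}) y) = muA (s y)"
      proof (cases "y = a")
        case ya: True
        have c1: "cyc (B - {m}) y = Max (B - {m})" using ya minBm by (simp add: cyc_def)
        show ?thesis
        proof (cases "Max B = m")
          case True
          have "Max (B - {m}) = a"
          proof (rule Max_eqI)
            show "finite (B - {m})" using finBm .
            show "a \<in> B - {m}" using a_props by simp
            fix b assume b: "b \<in> B - {m}"
            have "b \<le> Max B" using finB b by simp
            then have "b < m" using b True by auto
            then show "b \<le> a" using a_props(3) b by simp
          qed
          moreover have "s y = m" using ya sa True by simp
          ultimately show ?thesis using c1 am by (simp add: muA_def)
        next
          case False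
          have "Max (B - {m}) = Max B"
            using Max_remove_other[OF finB _ False] mB by auto
          then show ?thesis using c1 ya sa by simp
        qed
      next
        case ya: False
        have c1: "cyc (B - {m}) y = Max ({b \<in> B. b < y} - {m})"
        proof -
          have "{b \<in> B - {m}. b < y} = {b \<in> B. b < y} - {m}" by auto
          then show ?thesis using ya minBm by (simp add: cyc_def)
        qed
        have sy: "s y = Max {b \<in> B. b < y}" using sB yB ya a_min by (simp add: cyc_def)
        have my: "m < y" using B_ge[of y] yB ya by auto
        have finS: "finite {b \<in> B. b < y}" using finB by simp
        show ?thesis
        proof (cases "Max {b \<in> B. b < y} = m")
          case True
          have "Max ({b \<in> B. b < y} - {m}) = a"
          proof (rule Max_eqI)
            show "finite ({b \<in> B. b < y} - {m})" using finS by simp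
            show "a \<in> {b \<in> B. b < y} - {m}" using a_props my by simp
            fix b assume b: "b \<in> {b \<in> B. b < y} - {m}"
            have "b \<le> Max {b \<in> B. b < y}" using finS b by simp
            then have "b < m" using b True by auto
            then show "b \<le> a" using a_props(3) b by simp
          qed
          then show ?thesis using c1 sy True am by (simp add: muA_def)
        next
          case False
          have "Max ({b \<in> B. b < y} - {m}) = Max {b \<in> B. b < y}"
            using Max_remove_other[OF finS _ False] mB my by auto
          then show ?thesis using c1 sy by simp
        qed
      qed
      show ?thesis using e1 e2 goal stv by simp
    qed
  qed
qed

end

lemma (in ncs) cross:
  assumes P: "P \<in> Ps" and Q: "Q \<in> Ps" and PQ: "P \<noteq> Q"
    and x: "x1 \<in> P" "x2 \<in> P" and y: "y1 \<in> Q" "y2 \<in> Q" and o: "x1 < y1" "y1 < x2" "x2 < y2"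
  shows False
proof -
  have X: "P \<noteq> Q \<and> (\<exists>a b c d. a \<in> P \<and> b \<in> P \<and> c \<in> Q \<and> d \<in> Q \<and> a < c \<and> c < b \<and> b < d)"
    by (rule conjI[OF PQ], rule exI[of _ x1], rule exI[of _ x2], rule exI[of _ y1], rule exI[of _ y2])
       (simp add: x y o)
  have "\<exists>P\<in>Ps. \<exists>Q\<in>Ps. P \<noteq> Q \<and> (\<exists>a b c d. a \<in> P \<and> b \<in> P \<and> c \<in> Q \<and> d \<in> Q \<and> a < c \<and> c < b \<and> b < d)"
    by (rule bexI[where x=P], rule bexI[where x=Q], rule X, rule Q, rule P)
  then show False by (rule notE[OF nc[unfolded noncrossing_def]])
qed

locale ncsB = ncs +
  assumes am0: "Suc (nc_perm n Ps m) < m"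
begin

definition i where "i = m - 1"

lemma im: "Suc i = m" using am0 by (simp add: i_def)
lemma i_lt: "i < m" using im by linarith
lemma ai: "a < i" using am0 by (simp add: i_def a_def)
lemma in_: "i < n" using i_lt mn by linarith

lemma iB: "i \<notin> B"
proof
  assume "i \<in> B"
  then have "i \<le> a" using a_props(3) i_lt by simp
  with ai show False by simp
qed

lemma single: "{i} \<in> Ps"
proof -
  obtain C where C: "C \<in> Ps" "i \<in> C" using blk_of[OF in_] by blast
  have CB: "C \<noteq> B" using C(2) iB by auto
  have fC: "finite C" using part_finite[OF p C(1)] by simp
  have "C \<subseteq> {i}"
  proof
    fix c assume c: "c \<in> C"
    show "c \<in> {i}"
    proof (rule ccontr)
      assume "c \<notin> {i}"
      then have ci: "c \<noteq> i" by simp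
      have cB: "c \<notin> B" using notB[OF C(1) CB c] .
      then have "c \<noteq> a" "c \<noteq> m" using a_props(2) mB by auto
      have h1: "c < a \<or> a < c" by (rule linorder_neqE_nat[OF \<open>c \<noteq> a\<close>]) (erule disjI1, erule disjI2)
      have h2: "c < i \<or> i < c" by (rule linorder_neqE_nat[OF ci]) (erule disjI1, erule disjI2)
      have h3: "c < m \<or> m < c" by (rule linorder_neqE_nat[OF \<open>c \<noteq> m\<close>]) (erule disjI1, erule disjI2)
      from h1 show False
      proof
        assume c1: "c < a"
        show False by (rule cross[OF C(1) B CB c C(2) a_props(2) mB c1 ai i_lt])
      next
        assume c1: "a < c"
        from h2 show False
        proof
          assume c2: "c < i"
          have "Min C \<le> c" using fC c by simp
          then have "i \<noteq> Min C" using c2 by simp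
          then have "cyc C i < i" using cyc_lt[OF fC C(2)] by simp
          moreover have "i \<le> s i" using minim[OF i_lt] .
          ultimately show False using s_blk[OF C] by simp
        next
          assume c2: "i < c"
          from h3 show False
          proof
            assume "c < m" then show False using c2 im by linarith
          next
            assume c3: "m < c"
            have o1: "a < i" using ai .
            have o2: "i < m" using i_lt .
            show False by (rule cross[OF B C(1) CB[symmetric] a_props(2) mB C(2) c o1 o2 c3])
          qed
        qed
      qed
    qed
  qed
  then have "C = {i}" using C(2) by auto
  then show ?thesis using C(1) by simp
qed

lemma si: "s i = i" using s_blk[OF single] by (simp add: cyc_def)

definition rB where "rB j = (if j < i then s j else s (Suc j))"

lemma B_minus: "ins_minus i rB = s"
proof
  fix j show "ins_minus i rB j = s j"
  proof (cases "j < i")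
    case True then show ?thesis by (simp add: ins_minus_def rB_def)
  next
    case False
    show ?thesis
    proof (cases "j = i")
      case True then show ?thesis using si by (simp add: ins_minus_def)
    next
      case ji: False
      have "Suc (j - 1) = j" "\<not> j - 1 < i" using False ji by auto
      then show ?thesis using False ji by (simp add: ins_minus_def rB_def)
    qed
  qed
qed

lemma B_lt: "rB i < i" using ai im sm by (simp add: rB_def)

lemma B_ne: "\<forall>j. rB j \<noteq> i"
proof
  fix j show "rB j \<noteq> i"
  proof (cases "j < i")
    case True
    then show ?thesis using s_inj[of j i] si by (auto simp: rB_def)
  next
    case False
    then show ?thesis using s_inj[of "Suc j" i] si by (auto simp: rB_def)
  qed
qed

definition Ps1 where "Ps1 = insert (B \<union> {i}) (Ps - {B, {i}})"

lemma Bne_i: "B \<noteq> {i}" using mB i_lt by auto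

lemma B_part: "partition_on {..<n} Ps1"
  unfolding Ps1_def by (rule part_merge[OF p B single Bne_i])

lemma i_only: "C \<in> Ps \<Longrightarrow> i \<in> C \<Longrightarrow> C = {i}"
  using part_uniq[OF p _ single] by blast

lemma B_nc: "noncrossing Ps1"
proof (rule nc_transfer[OF nc, where f="\<lambda>P. if i \<in> P then B else P" and g="\<lambda>x. if x = i then m else x"])
  fix P x y assume P: "P \<in> Ps1" and xy: "x \<in> P" "y \<in> P" "x \<noteq> y"
  show "(if i \<in> P then B else P) \<in> Ps \<and> (\<lambda>x. if x = i then m else x) ` P \<subseteq> (if i \<in> P then B else P)"
  proof (cases "P = B \<union> {i}")
    case True then show ?thesis using B mB by auto
  next
    case False
    then have P': "P \<in> Ps" "P \<noteq> B" "P \<noteq> {i}" using P unfolding Ps1_def by auto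
    then have "i \<notin> P" using i_only by blast
    then show ?thesis using P' by auto
  qed
next
  fix P Q x y u v assume P: "P \<in> Ps1" and Q: "Q \<in> Ps1" and PQ: "P \<noteq> Q"
  have c: "X = B \<union> {i} \<or> (X \<in> Ps \<and> X \<noteq> B \<and> X \<noteq> {i} \<and> i \<notin> X)" if "X \<in> Ps1" for X
    using that i_only unfolding Ps1_def by auto
  show "(if i \<in> P then B else P) \<noteq> (if i \<in> Q then B else Q)"
    using c[OF P] c[OF Q] PQ by auto
next
  fix P Q x y assume P: "P \<in> Ps1" and Q: "Q \<in> Ps1" and PQ: "P \<noteq> Q" and x: "x \<in> P" and y: "y \<in> Q" and xy: "x < y"
  have c: "X = B \<union> {i} \<or> (X \<in> Ps \<and> X \<noteq> B \<and> X \<noteq> {i} \<and> i \<notin> X \<and> m \<notin> X)" if "X \<in> Ps1" for X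
  proof -
    have mX: "m \<notin> Y" if "Y \<in> Ps" "Y \<noteq> B" for Y using notB[OF that] mB by blast
    show ?thesis using that i_only mX unfolding Ps1_def by auto
  qed
  show "(if x = i then m else x) < (if y = i then m else y)"
  proof (cases "x = i")
    case True
    then have "P = B \<union> {i}" using c[OF P] x by auto
    then have "Q \<noteq> B \<union> {i}" using PQ by simp
    then have "y \<noteq> m" "y \<noteq> i" using c[OF Q] y by auto
    then show ?thesis using True xy im by auto
  next
    case False
    show ?thesis
    proof (cases "y = i")
      case True then show ?thesis using False xy im by auto
    next
      case False2: False then show ?thesis using False xy by auto
    qed
  qed
qed

end

context ncsB begin

lemma B_plus_val: "ins_plus i rB k = (if k = i then a else if k = m then i else s k)"
proof (cases "k < i")
  case True then show ?thesis using i_lt by (simp add: ins_plus_def rB_def)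
next
  case False
  show ?thesis
  proof (cases "k = i")
    case True then show ?thesis using im sm by (simp add: ins_plus_def rB_def)
  next
    case ki: False
    show ?thesis
    proof (cases "k = m")
      case True then show ?thesis using im i_lt by (simp add: ins_plus_def)
    next
      case km: False
      have "Suc (k - 1) = k" "\<not> k - 1 < i" "\<not> k \<le> i" "k \<noteq> Suc i" using False ki km im by auto
      then show ?thesis using ki km by (simp add: ins_plus_def rB_def)
    qed
  qed
qed

lemma Bi_min: "Min (B \<union> {i}) = a"
  using a_props a_min finB ai by (intro Min_eqI) auto

lemma B_eq_plus: "ins_plus i rB = nc_perm n Ps1"
proof
  fix k show "ins_plus i rB k = nc_perm n Ps1 k"
  proof (cases "n \<le> k")
    case True
    then have "k \<noteq> i" "k \<noteq> m" using in_ mn by auto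
    then show ?thesis using True s_ge nc_perm_ge[OF True] B_plus_val by simp
  next
    case False
    then have "k < n" by simp
    then obtain C where C: "C \<in> Ps" "k \<in> C" using blk_of by blast
    have blk: "B \<union> {i} \<in> Ps1" unfolding Ps1_def by simp
    have finBi: "finite (B \<union> {i})" using finB by simp
    show ?thesis
    proof (cases "C = {i}")
      case True
      then have ki: "k = i" using C by simp
      have e: "nc_perm n Ps1 k = cyc (B \<union> {i}) i" using nc_perm_blk[OF B_part blk] ki by simp
      have "Max {b \<in> B \<union> {i}. b < i} = a"
      proof (rule Max_eqI)
        show "finite {b \<in> B \<union> {i}. b < i}" using finBi by simp
        show "a \<in> {b \<in> B \<union> {i}. b < i}" using a_props ai by simp
        fix b assume b: "b \<in> {b \<in> B \<union> {i}. b < i}"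
        then have "b \<in> B" "b < m" using i_lt by auto
        then show "b \<le> a" using a_props(3) by simp
      qed
      then have "cyc (B \<union> {i}) i = a" using Bi_min ai by (simp add: cyc_def)
      then show ?thesis using e ki B_plus_val by simp
    next
      case Ci: False
      show ?thesis
      proof (cases "C = B")
        case CB: True
        have kB: "k \<in> B" using C CB by simp
        have ki: "k \<noteq> i" using kB iB by auto
        have e: "nc_perm n Ps1 k = cyc (B \<union> {i}) k" using nc_perm_blk[OF B_part blk] kB by simp
        show ?thesis
        proof (cases "k = a")
          case True
          have "Max (B \<union> {i}) = Max B"
          proof (rule Max_eqI)
            show "finite (B \<union> {i})" using finBi .
            show "Max B \<in> B \<union> {i}" using maxB by simp
            fix b assume "b \<in> B \<union> {i}"
            then show "b \<le> Max B" using finB maxB(1) i_lt by auto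
          qed
          then have "cyc (B \<union> {i}) k = s a" using True Bi_min sa by (simp add: cyc_def)
          then show ?thesis using e True B_plus_val ai a_props(1) by simp
        next
          case ka: False
          show ?thesis
          proof (cases "k = m")
            case True
            have "Max {b \<in> B \<union> {i}. b < m} = i"
            proof (rule Max_eqI)
              show "finite {b \<in> B \<union> {i}. b < m}" using finBi by simp
              show "i \<in> {b \<in> B \<union> {i}. b < m}" using i_lt by simp
              fix b assume b: "b \<in> {b \<in> B \<union> {i}. b < m}"
              show "b \<le> i"
              proof (cases "b = i")
                case False
                then have "b \<in> B" "b < m" using b by auto
                then show ?thesis using a_props(3) ai by fastforce
              qed simp
            qed
            then have "cyc (B \<union> {i}) k = i" using True Bi_min ka by (simp add: cyc_def)
            then show ?thesis using e True B_plus_val i_lt by simp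
          next
            case km: False
            have mk: "m < k" using B_ge[OF kB ka] km by simp
            have "{b \<in> B \<union> {i}. b < k} = insert i {b \<in> B. b < k}" using mk i_lt by auto
            moreover have "Max (insert i {b \<in> B. b < k}) = Max {b \<in> B. b < k}"
            proof (rule Max_eqI)
              show "finite (insert i {b \<in> B. b < k})" using finB by simp
              have ne: "{b \<in> B. b < k} \<noteq> {}" using mB mk by auto
              show "Max {b \<in> B. b < k} \<in> insert i {b \<in> B. b < k}" using Max_in[OF _ ne] finB by simp
              fix b assume b: "b \<in> insert i {b \<in> B. b < k}"
              have "m \<le> Max {b \<in> B. b < k}" using mB mk finB by simp
              then show "b \<le> Max {b \<in> B. b < k}" using b i_lt finB by auto
            qed
            ultimately have "cyc (B \<union> {i}) k = Max {b \<in> B. b < k}" using Bi_min ka by (simp add: cyc_def)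
            also have "\<dots> = s k" using sB[OF kB] a_min ka by (simp add: cyc_def)
            finally show ?thesis using e B_plus_val ki km by simp
          qed
        qed
      next
        case CB: False
        have blkC: "C \<in> Ps1" using C(1) CB Ci unfolding Ps1_def by simp
        have "k \<notin> B" using notB[OF C(1) CB C(2)] .
        moreover have "k \<noteq> i" using i_only[OF C(1)] Ci C(2) by auto
        ultimately have "k \<noteq> i" "k \<noteq> m" using mB by auto
        then show ?thesis using nc_perm_blk[OF B_part blkC C(2)] s_blk[OF C] B_plus_val by simp
      qed
    qed
  qed
qed

lemma B_msr: "msr n (ins_plus i rB) < msr n s"
proof (rule msr_less[where i=i])
  show "Suc i < n" using im mn by simp
  fix k assume "k \<noteq> i" "k \<noteq> Suc i"
  then show "ins_plus i rB k = s k" using B_plus_val im by simp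
next
  define x where "x = i - a"
  have x1: "1 \<le> x" using ai by (simp add: x_def)
  have ma: "Suc i - a = Suc x" using ai by (simp add: x_def)
  have "dd (ins_plus i rB i) i + dd (ins_plus i rB (Suc i)) (Suc i) = x^2 + 1"
    using B_plus_val im ai by (simp add: dd_def x_def)
  also have "\<dots> < (Suc x)^2" using x1 by (simp add: power2_eq_square)
  also have "\<dots> = dd (s i) i + dd (s (Suc i)) (Suc i)"
    using si sm im ai ma by (simp add: dd_def)
  finally show "dd (ins_plus i rB i) i + dd (ins_plus i rB (Suc i)) (Suc i) < dd (s i) i + dd (s (Suc i)) (Suc i)" .
qed

definition muB where "muB k = (if k < i then k else k - 1)"
definition Ps2 where "Ps2 = (`) muB ` (Ps - {{i}})"

lemma muB_mono: "mono muB" unfolding muB_def by (rule monoI) auto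

lemma muB_img: "muB ` ({..<n} - {i}) = {..<n - 1}"
proof
  show "muB ` ({..<n} - {i}) \<subseteq> {..<n - 1}" using im mn by (auto simp: muB_def)
  show "{..<n - 1} \<subseteq> muB ` ({..<n} - {i})"
  proof
    fix j assume j: "j \<in> {..<n - 1}"
    show "j \<in> muB ` ({..<n} - {i})"
    proof (cases "j < i")
      case True then have "muB j = j" by (simp add: muB_def)
      moreover have "j \<in> {..<n} - {i}" using j True by auto
      ultimately show ?thesis by (metis image_eqI)
    next
      case False then have "muB (Suc j) = j" by (simp add: muB_def)
      moreover have "Suc j \<in> {..<n} - {i}" using j False by auto
      ultimately show ?thesis by (metis image_eqI)
    qed
  qed
qed

lemma muB_inj: "y \<noteq> i \<Longrightarrow> y' \<noteq> i \<Longrightarrow> muB y = muB y' \<Longrightarrow> y = y'"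
  by (auto simp: muB_def split: if_splits)

lemma B2_part: "partition_on {..<n - 1} Ps2"
  unfolding Ps2_def
proof (rule img_part[OF part_remove_single[OF p single] muB_img])
  fix C D y y' assume C: "C \<in> Ps - {{i}}" and D: "D \<in> Ps - {{i}}" and y: "y \<in> C" and y': "y' \<in> D"
    and e: "muB y = muB y'"
  have "y \<noteq> i" using C y i_only by auto
  moreover have "y' \<noteq> i" using D y' i_only by auto
  ultimately have "y = y'" using muB_inj e by simp
  then show "C = D" using part_uniq[OF p, of C D y] C D y y' by simp
qed

lemma B2_nc: "noncrossing Ps2"
  unfolding Ps2_def by (rule img_nc[OF muB_mono nc_subset[OF nc]]) auto

lemma B_std: "stdz i rB = nc_perm (n - 1) Ps2"
proof
  fix j show "stdz i rB j = nc_perm (n - 1) Ps2 j"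
  proof (cases "n - 1 \<le> j")
    case True
    then have "\<not> j < i" "n \<le> Suc j" using im mn by auto
    then have "rB j = Suc j" using s_ge by (simp add: rB_def)
    then show ?thesis using True \<open>\<not> j < i\<close> by (simp add: stdz_def nc_perm_ge)
  next
    case False
    define y where "y = (if j < i then j else Suc j)"
    have yn: "y < n" using False y_def by auto
    have yi: "y \<noteq> i" using y_def by auto
    have muy: "muB y = j" by (simp add: y_def muB_def)
    have ry: "rB j = s y" by (simp add: y_def rB_def)
    obtain C where C: "C \<in> Ps" "y \<in> C" using blk_of[OF yn] by blast
    have Ci: "C \<noteq> {i}" using C(2) yi by auto
    have fC: "finite C" using part_finite[OF p C(1)] by simp
    have blk: "muB ` C \<in> Ps2" using C(1) Ci by (simp add: Ps2_def)
    have jC: "j \<in> muB ` C" using C(2) muy by (metis image_eqI)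
    have e1: "nc_perm (n - 1) Ps2 j = cyc (muB ` C) (muB y)"
      using nc_perm_blk[OF B2_part blk jC] muy by simp
    have iC: "i \<notin> C" using i_only[OF C(1)] Ci by auto
    have "inj_on muB C"
    proof (rule inj_onI)
      fix x x' assume h: "x \<in> C" "x' \<in> C" "muB x = muB x'"
      have "x \<noteq> i" "x' \<noteq> i" using h iC by auto
      then show "x = x'" using muB_inj h(3) by simp
    qed
    then have "cyc (muB ` C) (muB y) = muB (cyc C y)" using cyc_image[OF muB_mono _ fC C(2)] by simp
    moreover have "stdz i rB j = muB (s y)" using ry by (simp add: stdz_def muB_def)
    ultimately show ?thesis using e1 s_blk[OF C] by simp
  qed
qed

end

lemma (in ncsA) caseA_good:
  assumes IHm: "\<And>Ps'. partition_on {..<n} Ps' \<Longrightarrow> noncrossing Ps' \<Longrightarrow> msr n (nc_perm n Ps') < msr n (nc_perm n Ps) \<Longrightarrow> good (nc_perm n Ps')"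
    and IHn: "\<And>Ps'. partition_on {..<n - 1} Ps' \<Longrightarrow> noncrossing Ps' \<Longrightarrow> good (nc_perm (n - 1) Ps')"
  shows "good (nc_perm n Ps)"
proof -
  have g1: "good (ins_minus a rA)"
    using IHm[OF A_part A_nc] A_msr A_eq_minus by simp
  have g2: "good (stdz a rA)"
    using IHn[OF A2_part A2_nc] A_std by simp
  have "good (ins_plus a rA)" by (rule goodA[OF A_gt A_ne g1 g2])
  then show ?thesis using A_plus by simp
qed

lemma (in ncsB) caseB_good:
  assumes IHm: "\<And>Ps'. partition_on {..<n} Ps' \<Longrightarrow> noncrossing Ps' \<Longrightarrow> msr n (nc_perm n Ps') < msr n (nc_perm n Ps) \<Longrightarrow> good (nc_perm n Ps')"
    and IHn: "\<And>Ps'. partition_on {..<n - 1} Ps' \<Longrightarrow> noncrossing Ps' \<Longrightarrow> good (nc_perm (n - 1) Ps')"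
  shows "good (nc_perm n Ps)"
proof -
  have g1: "good (ins_plus i rB)"
    using IHm[OF B_part B_nc] B_msr B_eq_plus by simp
  have g2: "good (stdz i rB)"
    using IHn[OF B2_part B2_nc] B_std by simp
  have "good (ins_minus i rB)" by (rule goodB[OF B_lt B_ne g1 g2])
  then show ?thesis using B_minus by simp
qed

lemma nc_id:
  assumes p: "partition_on {..<n} Ps" and h: "\<And>k. \<not> nc_perm n Ps k < k"
  shows "nc_perm n Ps = (\<lambda>k. k)"
proof
  fix k show "nc_perm n Ps k = k"
  proof (cases "k < n")
    case False then show ?thesis by (simp add: nc_perm_ge)
  next
    case True
    then obtain C where C: "C \<in> Ps" "k \<in> C" using part_cover[OF p] by blast
    have fC: "finite C" using part_finite[OF p C(1)] by simp
    have kmin: "k = Min C"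
    proof (rule ccontr)
      assume "k \<noteq> Min C"
      then have "cyc C k < k" using cyc_lt[OF fC C(2)] by simp
      then show False using h[of k] nc_perm_blk[OF p C] by simp
    qed
    have MC: "Max C \<in> C" using Max_in[OF fC] C(2) by auto
    have "Max C = Min C"
    proof (rule ccontr)
      assume "Max C \<noteq> Min C"
      then have "cyc C (Max C) < Max C" using cyc_lt[OF fC MC] by simp
      then show False using h[of "Max C"] nc_perm_blk[OF p C(1) MC] by simp
    qed
    then show ?thesis using nc_perm_blk[OF p C] kmin by (simp add: cyc_def)
  qed
qed

theorem nc_good: "partition_on {..<n} Ps \<Longrightarrow> noncrossing Ps \<Longrightarrow> good (nc_perm n Ps)"
proof (induction n arbitrary: Ps rule: less_induct)
  case (less n)
  have IHn: "good (nc_perm (n - 1) Ps')" if "partition_on {..<n - 1} Ps'" "noncrossing Ps'" "0 < n" for Ps'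
    using less.IH[of "n - 1"] that by simp
  have main: "\<And>Ps. partition_on {..<n} Ps \<Longrightarrow> noncrossing Ps \<Longrightarrow> msr n (nc_perm n Ps) = M \<Longrightarrow> good (nc_perm n Ps)" for M
  proof (induction M rule: less_induct)
    case (less M Ps)
    note p = less.prems(1) and nc = less.prems(2)
    have IHm: "good (nc_perm n Ps')" if "partition_on {..<n} Ps'" "noncrossing Ps'" "msr n (nc_perm n Ps') < msr n (nc_perm n Ps)" for Ps'
      using less.IH[OF _ that(1,2) refl] that(3) less.prems(3) by simp
    show ?case
    proof (cases "\<exists>k. nc_perm n Ps k < k")
      case False
      then have "nc_perm n Ps = (\<lambda>k. k)" using nc_id[OF p] by blast
      then show ?thesis using good_id by simp
    next
      case True
      define m where "m = (LEAST k. nc_perm n Ps k < k)"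
      have mlt: "nc_perm n Ps m < m" unfolding m_def using True by (rule LeastI_ex)
      have minim: "k \<le> nc_perm n Ps k" if "k < m" for k
        using not_less_Least[OF that[unfolded m_def]] by simp
      have mn: "m < n"
      proof (rule ccontr)
        assume "\<not> m < n"
        then have "nc_perm n Ps m = m" by (simp add: nc_perm_ge)
        then show False using mlt by simp
      qed
      then obtain B where B: "B \<in> Ps" "m \<in> B" using part_cover[OF p] by blast
      have n0: "0 < n" using mn by simp
      have IHn': "good (nc_perm (n - 1) Ps')" if "partition_on {..<n - 1} Ps'" "noncrossing Ps'" for Ps'
        using IHn[OF that n0] .
      have L: "ncs n Ps m B" by (rule ncs.intro[OF p nc mn B(1) B(2) mlt minim])
      show ?thesis
      proof (cases "m = Suc (nc_perm n Ps m)")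
        case True
        have "ncsA n Ps m B" by (rule ncsA.intro[OF L]) (rule ncsA_axioms.intro[OF True])
        then show ?thesis using ncsA.caseA_good IHm IHn' by blast
      next
        case False
        then have "Suc (nc_perm n Ps m) < m" using mlt by simp
        then have "ncsB n Ps m B" by (intro ncsB.intro[OF L] ncsB_axioms.intro)
        then show ?thesis using ncsB.caseB_good IHm IHn' by blast
      qed
    qed
  qed
  then show ?case using less.prems by blast
qed

theorem corollary8p13:
  fixes P :: "forest \<Rightarrow> var mpoly" and F :: forest and \<sigma> :: "nat \<Rightarrow> nat"
  assumes "is_double_forest_family P"
    and "is_forest F"
    and "noncrossing_perm \<sigma>"
  shows "graham_positive (ev \<sigma> (P F))"
proof -
  obtain n Ps where p: "partition_on {..<n} Ps" and nc: "noncrossing Ps" and s: "\<sigma> = nc_perm n Ps"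
    using assms(3) unfolding noncrossing_perm_def by blast
  have "good \<sigma>" using nc_good[OF p nc] s by simp
  then have "gp (ev \<sigma> (P F))" using good_gp[OF assms(1)] assms(2) by blast
  then show ?thesis by (rule gp_graham)
qed

end
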